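(* Fix finite nonempty sets $A$ and $\Omega$, a prior $\mu_0$ on $\Omega$ with $\mu_0(\omega)>0$ for all $\omega$, and a finite message set $M$ with $|M|>\max\{|\Omega|,|A|\}$. There is a set of environments of Lebesgue measure one in $[0,1]^{2|A||\Omega|}$ such that, for every environment in this set: if cheap-talk Sender values randomization, then commitment is valuable.
   Context: An environment is a pair $(u_S,u_R)$ of functions $A\times\Omega\to[0,1]$, identified with a point of $[0,1]^{2|A||\Omega|}$. A messaging strategy is $\sigma:\Omega\to\Delta M$ and an action strategy is $\rho:M\to\Delta A$. For $i\in\{S,R\}$, $U_i(\sigma,\rho)=\sum_{\omega,m,a}\mu_0(\omega)\sigma(m|\omega)\rho(a|m)u_i(a,\omega)$. A profile $(\sigma,\rho)$ is S-BR if $\sigma\in\arg\max_{\sigma'}U_S(\sigma',\rho)$, and R-BR if $\rho\in\arg\max_{\rho'}U_R(\sigma,\rho')$. A persuasion profile is an R-BR profile; the persuasion payoff is the maximum of $U_S$ over persuasion profiles. A cheap-talk equilibrium is an S-BR and R-BR profile; the cheap-talk payoff is the maximum of $U_S$ over cheap-talk equilibria. Commitment is valuable if the persuasion payoff strictly exceeds the cheap-talk payoff. $\sigma$ is partitional if for every $\omega$ some $m$ has $\sigma(m|\omega)=1$. The partitional cheap-talk payoff is the maximum of $U_S$ over cheap-talk equilibria with partitional $\sigma$. Cheap-talk Sender values randomization if the cheap-talk payoff strictly exceeds the partitional cheap-talk payoff. *)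

theory Defs
  imports "HOL-Analysis.Analysis"
begin

text \<open>Sender/Receiver game. Actions: type 'a, states: type 'w, messages: type 'm
  (all finite). A utility function is a map 'a \<Rightarrow> 'w \<Rightarrow> real.\<close>

definition is_prior :: "('w::finite \<Rightarrow> real) \<Rightarrow> bool" where
  "is_prior \<mu> \<longleftrightarrow> (\<forall>w. \<mu> w > 0) \<and> (\<Sum>w\<in>UNIV. \<mu> w) = 1"

definition msg_strat :: "('w::finite \<Rightarrow> 'm::finite \<Rightarrow> real) \<Rightarrow> bool" where
  "msg_strat \<sigma> \<longleftrightarrow> (\<forall>w m. \<sigma> w m \<ge> 0) \<and> (\<forall>w. (\<Sum>m\<in>UNIV. \<sigma> w m) = 1)"

definition act_strat :: "('m::finite \<Rightarrow> 'a::finite \<Rightarrow> real) \<Rightarrow> bool" where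
  "act_strat \<rho> \<longleftrightarrow> (\<forall>m a. \<rho> m a \<ge> 0) \<and> (\<forall>m. (\<Sum>a\<in>UNIV. \<rho> m a) = 1)"

definition U :: "('w::finite \<Rightarrow> real) \<Rightarrow> ('a::finite \<Rightarrow> 'w \<Rightarrow> real)
    \<Rightarrow> ('w \<Rightarrow> 'm::finite \<Rightarrow> real) \<Rightarrow> ('m \<Rightarrow> 'a \<Rightarrow> real) \<Rightarrow> real" where
  "U \<mu> u \<sigma> \<rho> = (\<Sum>w\<in>UNIV. \<Sum>m\<in>UNIV. \<Sum>a\<in>UNIV. \<mu> w * \<sigma> w m * \<rho> m a * u a w)"

definition profile :: "('w::finite \<Rightarrow> 'm::finite \<Rightarrow> real) \<Rightarrow> ('m \<Rightarrow> 'a::finite \<Rightarrow> real) \<Rightarrow> bool" where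
  "profile \<sigma> \<rho> \<longleftrightarrow> msg_strat \<sigma> \<and> act_strat \<rho>"

definition S_BR :: "('w::finite \<Rightarrow> real) \<Rightarrow> ('a::finite \<Rightarrow> 'w \<Rightarrow> real)
    \<Rightarrow> ('w \<Rightarrow> 'm::finite \<Rightarrow> real) \<Rightarrow> ('m \<Rightarrow> 'a \<Rightarrow> real) \<Rightarrow> bool" where
  "S_BR \<mu> uS \<sigma> \<rho> \<longleftrightarrow> (\<forall>\<sigma>'. msg_strat \<sigma>' \<longrightarrow> U \<mu> uS \<sigma>' \<rho> \<le> U \<mu> uS \<sigma> \<rho>)"

definition R_BR :: "('w::finite \<Rightarrow> real) \<Rightarrow> ('a::finite \<Rightarrow> 'w \<Rightarrow> real)
    \<Rightarrow> ('w \<Rightarrow> 'm::finite \<Rightarrow> real) \<Rightarrow> ('m \<Rightarrow> 'a \<Rightarrow> real) \<Rightarrow> bool" where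
  "R_BR \<mu> uR \<sigma> \<rho> \<longleftrightarrow> (\<forall>\<rho>'. act_strat \<rho>' \<longrightarrow> U \<mu> uR \<sigma> \<rho>' \<le> U \<mu> uR \<sigma> \<rho>)"

definition partitional :: "('w::finite \<Rightarrow> 'm::finite \<Rightarrow> real) \<Rightarrow> bool" where
  "partitional \<sigma> \<longleftrightarrow> (\<forall>w. \<exists>m. \<sigma> w m = 1)"

text \<open>Payoffs are maxima over the relevant sets of profiles; they are written as
  suprema (the maxima are attained by compactness and continuity).
  The itself-argument fixes the message type.\<close>

definition persuasion_payoff :: "'m::finite itself \<Rightarrow> ('w::finite \<Rightarrow> real)
    \<Rightarrow> ('a::finite \<Rightarrow> 'w \<Rightarrow> real) \<Rightarrow> ('a \<Rightarrow> 'w \<Rightarrow> real) \<Rightarrow> real" where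
  "persuasion_payoff (_::'m itself) \<mu> uS uR =
     Sup {U \<mu> uS \<sigma> \<rho> | (\<sigma>::'w \<Rightarrow> 'm \<Rightarrow> real) \<rho>. profile \<sigma> \<rho> \<and> R_BR \<mu> uR \<sigma> \<rho>}"

definition cheap_talk_payoff :: "'m::finite itself \<Rightarrow> ('w::finite \<Rightarrow> real)
    \<Rightarrow> ('a::finite \<Rightarrow> 'w \<Rightarrow> real) \<Rightarrow> ('a \<Rightarrow> 'w \<Rightarrow> real) \<Rightarrow> real" where
  "cheap_talk_payoff (_::'m itself) \<mu> uS uR =
     Sup {U \<mu> uS \<sigma> \<rho> | (\<sigma>::'w \<Rightarrow> 'm \<Rightarrow> real) \<rho>.
            profile \<sigma> \<rho> \<and> S_BR \<mu> uS \<sigma> \<rho> \<and> R_BR \<mu> uR \<sigma> \<rho>}"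

definition partitional_cheap_talk_payoff :: "'m::finite itself \<Rightarrow> ('w::finite \<Rightarrow> real)
    \<Rightarrow> ('a::finite \<Rightarrow> 'w \<Rightarrow> real) \<Rightarrow> ('a \<Rightarrow> 'w \<Rightarrow> real) \<Rightarrow> real" where
  "partitional_cheap_talk_payoff (_::'m itself) \<mu> uS uR =
     Sup {U \<mu> uS \<sigma> \<rho> | (\<sigma>::'w \<Rightarrow> 'm \<Rightarrow> real) \<rho>.
            profile \<sigma> \<rho> \<and> S_BR \<mu> uS \<sigma> \<rho> \<and> R_BR \<mu> uR \<sigma> \<rho> \<and> partitional \<sigma>}"

definition commitment_valuable :: "'m::finite itself \<Rightarrow> ('w::finite \<Rightarrow> real)
    \<Rightarrow> ('a::finite \<Rightarrow> 'w \<Rightarrow> real) \<Rightarrow> ('a \<Rightarrow> 'w \<Rightarrow> real) \<Rightarrow> bool" where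
  "commitment_valuable M \<mu> uS uR \<longleftrightarrow> persuasion_payoff M \<mu> uS uR > cheap_talk_payoff M \<mu> uS uR"

definition values_randomization :: "'m::finite itself \<Rightarrow> ('w::finite \<Rightarrow> real)
    \<Rightarrow> ('a::finite \<Rightarrow> 'w \<Rightarrow> real) \<Rightarrow> ('a \<Rightarrow> 'w \<Rightarrow> real) \<Rightarrow> bool" where
  "values_randomization M \<mu> uS uR \<longleftrightarrow>
     cheap_talk_payoff M \<mu> uS uR > partitional_cheap_talk_payoff M \<mu> uS uR"

text \<open>An environment is a point of [0,1]^(2|A||Omega|), coordinates indexed by
  ('a \<times> 'w) + ('a \<times> 'w): Inl gives u_S, Inr gives u_R.\<close>

definition env_uS :: "real ^ (('a::finite \<times> 'w::finite) + ('a \<times> 'w)) \<Rightarrow> 'a \<Rightarrow> 'w \<Rightarrow> real" where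
  "env_uS x a w = x $ Inl (a, w)"

definition env_uR :: "real ^ (('a::finite \<times> 'w::finite) + ('a \<times> 'w)) \<Rightarrow> 'a \<Rightarrow> 'w \<Rightarrow> real" where
  "env_uR x a w = x $ Inr (a, w)"

end

theory Submission
  imports Defs
begin


lemma negl_span:
  fixes g :: "'w \<Rightarrow> 'i::finite" and T :: "'w set" and C :: "'a set"
    and h :: "'w \<Rightarrow> real^'i \<Rightarrow> real" and wv :: "'a \<Rightarrow> 'w \<Rightarrow> real^'i \<Rightarrow> real"
  assumes fin: "finite T" "finite C" and inj: "inj_on g T" and card: "card C < card T"
    and lin: "\<And>\<omega>. bounded_linear (h \<omega>)" "\<And>c \<omega>. bounded_linear (wv c \<omega>)"
    and indep: "\<And>x y \<omega> c. (\<And>i. i \<notin> g ` T \<Longrightarrow> x$i = y$i) \<Longrightarrow> h \<omega> x = h \<omega> y \<and> wv c \<omega> x = wv c \<omega> y"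
  shows "negligible {x. \<exists>l. \<forall>\<omega>\<in>T. x$(g \<omega>) = h \<omega> x + (\<Sum>c\<in>C. l c * wv c \<omega> x)}"
proof -
  from card have "T \<noteq> {}" by auto
  then obtain \<omega>0 where w0: "\<omega>0 \<in> T" by auto
  have "card C \<le> card (T - {\<omega>0})" using card w0 fin by simp
  then obtain \<theta> where th: "\<theta> ` C \<subseteq> T - {\<omega>0}" "inj_on \<theta> C"
    using card_le_inj[OF fin(2), of "T - {\<omega>0}"] fin by auto
  define F where "F \<omega> x = h \<omega> x + (\<Sum>c\<in>C. x$(g (\<theta> c)) * wv c \<omega> x)" for \<omega> x
  define f where "f x = x + (\<Sum>\<omega>\<in>T. (F \<omega> x - x$(g \<omega>)) *\<^sub>R axis (g \<omega>) (1::real))" for x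
  define S where "S = {x::real^'i. axis (g \<omega>0) 1 \<bullet> x = 0}"
  have negS: "negligible S" unfolding S_def
    by (rule negligible_hyperplane) (simp add: axis_eq_0_iff)
  have fT: "f x $ (g \<omega>) = F \<omega> x" if "\<omega> \<in> T" for x \<omega>
  proof -
    have "(\<Sum>\<omega>'\<in>T. (F \<omega>' x - x$(g \<omega>')) * axis (g \<omega>') (1::real) $ g \<omega>)
        = (\<Sum>\<omega>'\<in>T. if \<omega>' = \<omega> then F \<omega>' x - x$(g \<omega>') else 0)"
      apply (rule sum.cong, simp)
      using inj that by (auto simp: axis_def inj_on_def)
    also have "\<dots> = F \<omega> x - x$(g \<omega>)" using that fin by simp
    finally show ?thesis unfolding f_def by simp
  qed
  have diff: "f differentiable_on UNIV"
  proof (rule differentiable_at_imp_differentiable_on)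
    fix x :: "real^'i"
    show "f differentiable (at x)"
      unfolding f_def F_def
      by (intro derivative_intros ballI bounded_linear_imp_differentiable lin bounded_linear_vec_nth fin)
  qed
  have "{x. \<exists>l. \<forall>\<omega>\<in>T. x$(g \<omega>) = h \<omega> x + (\<Sum>c\<in>C. l c * wv c \<omega> x)} \<subseteq> f ` S"
  proof
    fix x assume "x \<in> {x. \<exists>l. \<forall>\<omega>\<in>T. x$(g \<omega>) = h \<omega> x + (\<Sum>c\<in>C. l c * wv c \<omega> x)}"
    then obtain l where l: "\<And>\<omega>. \<omega>\<in>T \<Longrightarrow> x$(g \<omega>) = h \<omega> x + (\<Sum>c\<in>C. l c * wv c \<omega> x)" by auto
    define x' where "x' = (\<chi> i. if i \<in> g ` T then (if i \<in> (g \<circ> \<theta>) ` C then l (inv_into C (g \<circ> \<theta>) i) else 0) else x$i)"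
    have injgt: "inj_on (g \<circ> \<theta>) C" using th inj by (auto simp: inj_on_def subset_iff)
    have x'c: "x'$(g (\<theta> c)) = l c" if "c \<in> C" for c
    proof -
      have "(g \<circ> \<theta>) c \<in> (g \<circ> \<theta>) ` C" using that by blast
      moreover have "inv_into C (g \<circ> \<theta>) ((g \<circ> \<theta>) c) = c" using inv_into_f_f[OF injgt that] by simp
      moreover have "g (\<theta> c) \<in> g ` T" using th that by auto
      ultimately show ?thesis by (simp add: x'_def)
    qed
    have x'0: "x' \<in> S"
    proof -
      have "g \<omega>0 \<notin> (g \<circ> \<theta>) ` C"
      proof
        assume "g \<omega>0 \<in> (g \<circ> \<theta>) ` C"
        then obtain c where c: "c \<in> C" "g (\<theta> c) = g \<omega>0" by auto
        have "\<theta> c \<in> T" "\<theta> c \<noteq> \<omega>0" using th c(1) by auto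
        then show False using inj_onD[OF inj c(2)] w0 by auto
      qed
      then show ?thesis using w0 by (simp add: S_def x'_def inner_axis')
    qed
    have same: "h \<omega> x' = h \<omega> x \<and> wv c \<omega> x' = wv c \<omega> x" for \<omega> c
      by (rule indep) (simp add: x'_def)
    have "f x' = x"
    proof (rule vec_eq_iff[THEN iffD2], rule allI)
      fix i show "f x' $ i = x $ i"
      proof (cases "i \<in> g ` T")
        case True
        then obtain \<omega> where w: "\<omega> \<in> T" "i = g \<omega>" by auto
        have "F \<omega> x' = h \<omega> x + (\<Sum>c\<in>C. l c * wv c \<omega> x)"
          unfolding F_def using same x'c by (intro arg_cong2[where f="(+)"] sum.cong) auto
        then show ?thesis using fT[OF w(1), of x'] l[OF w(1)] w(2) by simp
      next
        case False
        have "(\<Sum>\<omega>\<in>T. (F \<omega> x' - x'$(g \<omega>)) * axis (g \<omega>) (1::real) $ i) = 0"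
          proof (rule sum.neutral, rule ballI)
          fix \<omega> assume "\<omega> \<in> T"
          then have "g \<omega> \<noteq> i" using False by auto
          then show "(F \<omega> x' - x'$(g \<omega>)) * axis (g \<omega>) (1::real) $ i = 0" by (simp add: axis_def)
        qed
        then show ?thesis using False by (simp add: f_def x'_def)
      qed
    qed
    then show "x \<in> f ` S" using x'0 by blast
  qed
  moreover have "negligible (f ` S)"
    by (rule negligible_differentiable_image_negligible[OF order_refl negS])
       (rule differentiable_on_subset[OF diff subset_UNIV])
  ultimately show ?thesis using negligible_subset by blast
qed



definition PS :: "('w::finite \<Rightarrow> real) \<Rightarrow> ('a::finite \<Rightarrow> 'w \<Rightarrow> real) \<Rightarrow> ('w \<Rightarrow> 'm::finite \<Rightarrow> real) \<Rightarrow> 'm \<Rightarrow> 'a \<Rightarrow> real" where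
  "PS \<mu> u \<sigma> m a = (\<Sum>w\<in>UNIV. \<mu> w * \<sigma> w m * u a w)"

definition VV :: "('a::finite \<Rightarrow> 'w \<Rightarrow> real) \<Rightarrow> ('m \<Rightarrow> 'a \<Rightarrow> real) \<Rightarrow> 'm \<Rightarrow> 'w \<Rightarrow> real" where
  "VV u \<rho> m w = (\<Sum>a\<in>UNIV. \<rho> m a * u a w)"

lemma U_PS: "U \<mu> u \<sigma> \<rho> = (\<Sum>m\<in>UNIV. \<Sum>a\<in>UNIV. \<rho> m a * PS \<mu> u \<sigma> m a)"
proof -
  have "U \<mu> u \<sigma> \<rho> = (\<Sum>m\<in>UNIV. \<Sum>w\<in>UNIV. \<Sum>a\<in>UNIV. \<mu> w * \<sigma> w m * \<rho> m a * u a w)"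
    unfolding U_def by (rule sum.swap)
  also have "\<dots> = (\<Sum>m\<in>UNIV. \<Sum>a\<in>UNIV. \<Sum>w\<in>UNIV. \<mu> w * \<sigma> w m * \<rho> m a * u a w)"
    by (rule sum.cong[OF refl], rule sum.swap)
  also have "\<dots> = (\<Sum>m\<in>UNIV. \<Sum>a\<in>UNIV. \<rho> m a * PS \<mu> u \<sigma> m a)"
    unfolding PS_def sum_distrib_left by (intro sum.cong refl) (simp add: algebra_simps)
  finally show ?thesis .
qed

lemma U_VV: "U \<mu> u \<sigma> \<rho> = (\<Sum>w\<in>UNIV. \<mu> w * (\<Sum>m\<in>UNIV. \<sigma> w m * VV u \<rho> m w))"
  unfolding U_def VV_def sum_distrib_left by (intro sum.cong refl) (simp add: algebra_simps)

lemma ex_max: "\<exists>x::'a::finite. \<forall>y. f y \<le> (f x::real)"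
proof -
  have "Max (range f) \<in> range f" by (rule Max_in) auto
  then obtain x where "Max (range f) = f x" by blast
  show ?thesis
  proof (intro exI allI)
    fix y show "f y \<le> f x" using Max_ge[of "range f" "f y"] \<open>Max (range f) = f x\<close> by auto
  qed
qed

lemma conv_le:
  fixes p f :: "'a::finite \<Rightarrow> real"
  assumes "\<And>a. p a \<ge> 0" "sum p UNIV = 1" "\<And>a. f a \<le> M"
  shows "(\<Sum>a\<in>UNIV. p a * f a) \<le> M"
proof -
  have "(\<Sum>a\<in>UNIV. p a * f a) \<le> (\<Sum>a\<in>UNIV. p a * M)"
    by (intro sum_mono mult_left_mono assms)
  also have "\<dots> = M" using assms(2) by (simp add: sum_distrib_right[symmetric])
  finally show ?thesis .
qed

lemma conv_eq:
  fixes p f :: "'a::finite \<Rightarrow> real"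
  assumes "sum p UNIV = 1" "\<And>a. p a \<noteq> 0 \<Longrightarrow> f a = M"
  shows "(\<Sum>a\<in>UNIV. p a * f a) = M"
proof -
  have "(\<Sum>a\<in>UNIV. p a * f a) = (\<Sum>a\<in>UNIV. p a * M)"
    by (rule sum.cong[OF refl]) (metis assms(2) mult_zero_left)
  also have "\<dots> = M" using assms(1) by (simp add: sum_distrib_right[symmetric])
  finally show ?thesis .
qed

lemma conv_avg:
  fixes p f :: "'a::finite \<Rightarrow> real"
  assumes "\<And>a. p a \<ge> 0" "sum p UNIV = 1"
    and "\<And>a. p a > 0 \<Longrightarrow> f a \<le> (\<Sum>b\<in>UNIV. p b * f b)" and "p a > 0"
  shows "f a = (\<Sum>b\<in>UNIV. p b * f b)"
proof -
  define s where "s = (\<Sum>b\<in>UNIV. p b * f b)"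
  have nn: "\<forall>b\<in>UNIV. p b * (s - f b) \<ge> 0"
  proof
    fix b show "p b * (s - f b) \<ge> 0"
      using assms(1)[of b] assms(3)[of b] by (cases "p b > 0") (auto simp: s_def)
  qed
  have "(\<Sum>b\<in>UNIV. p b * (s - f b)) = (\<Sum>b\<in>UNIV. p b * s) - (\<Sum>b\<in>UNIV. p b * f b)"
    by (simp add: right_diff_distrib sum_subtractf)
  also have "\<dots> = s * sum p UNIV - s"
    by (simp add: sum_distrib_right[symmetric] mult.commute s_def)
  also have "\<dots> = 0" using assms(2) by simp
  finally have "\<forall>b\<in>UNIV. p b * (s - f b) = 0" using sum_nonneg_eq_0_iff[of UNIV "\<lambda>b. p b * (s - f b)"] nn by simp
  then have "p a * (s - f a) = 0" by auto
  then show ?thesis using assms(4) by (simp add: s_def)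
qed

lemma sum_upd:
  fixes F :: "'m::finite \<Rightarrow> real"
  shows "(\<Sum>k\<in>UNIV. (F(m := y)) k) = (\<Sum>k\<in>UNIV. F k) - F m + y"
proof -
  have "(\<Sum>k\<in>UNIV. (F(m := y)) k) = (F(m := y)) m + (\<Sum>k\<in>UNIV - {m}. (F(m := y)) k)"
    by (rule sum.remove) auto
  also have "(\<Sum>k\<in>UNIV - {m}. (F(m := y)) k) = (\<Sum>k\<in>UNIV - {m}. F k)" by (rule sum.cong) auto
  also have "(\<Sum>k\<in>UNIV. F k) = F m + (\<Sum>k\<in>UNIV - {m}. F k)" by (rule sum.remove) auto
  ultimately show ?thesis by simp
qed

lemma U_rho_upd:
  "U \<mu> u \<sigma> (\<rho>(m := r)) = U \<mu> u \<sigma> \<rho> - (\<Sum>a\<in>UNIV. \<rho> m a * PS \<mu> u \<sigma> m a) + (\<Sum>a\<in>UNIV. r a * PS \<mu> u \<sigma> m a)"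
proof -
  let ?F = "\<lambda>k. \<Sum>a\<in>UNIV. \<rho> k a * PS \<mu> u \<sigma> k a"
  have "U \<mu> u \<sigma> (\<rho>(m := r)) = (\<Sum>k\<in>UNIV. (?F(m := (\<Sum>a\<in>UNIV. r a * PS \<mu> u \<sigma> m a))) k)"
    unfolding U_PS by (rule sum.cong) auto
  then show ?thesis unfolding sum_upd U_PS by simp
qed

lemma U_sigma_upd:
  "U \<mu> u (\<sigma>(w := r)) \<rho> = U \<mu> u \<sigma> \<rho> - \<mu> w * (\<Sum>m\<in>UNIV. \<sigma> w m * VV u \<rho> m w) + \<mu> w * (\<Sum>m\<in>UNIV. r m * VV u \<rho> m w)"
proof -
  let ?F = "\<lambda>k. \<mu> k * (\<Sum>m\<in>UNIV. \<sigma> k m * VV u \<rho> m k)"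
  have "U \<mu> u (\<sigma>(w := r)) \<rho> = (\<Sum>k\<in>UNIV. (?F(w := \<mu> w * (\<Sum>m\<in>UNIV. r m * VV u \<rho> m w))) k)"
    unfolding U_VV by (rule sum.cong) auto
  then show ?thesis unfolding sum_upd U_VV by simp
qed

definition dlt :: "'a \<Rightarrow> 'a \<Rightarrow> real" where "dlt x = (\<lambda>y. if y = x then 1 else 0)"

lemma sum_dlt[simp]: "(\<Sum>y\<in>UNIV. dlt (x::'a::finite) y * f y) = f x"
proof -
  have "(\<Sum>y\<in>UNIV. dlt x y * f y) = (\<Sum>y\<in>UNIV. if y = x then f y else 0)"
    by (rule sum.cong) (auto simp: dlt_def)
  then show ?thesis by (simp add: sum.delta)
qed

lemma sum_dlt1[simp]: "(\<Sum>y\<in>(UNIV::'a::finite set). dlt x y) = 1"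
  by (simp add: dlt_def)

lemma act_strat_upd: "act_strat \<rho> \<Longrightarrow> act_strat (\<rho>(m := dlt a))"
  unfolding act_strat_def by (auto simp: dlt_def)

lemma msg_strat_upd: "msg_strat \<sigma> \<Longrightarrow> msg_strat (\<sigma>(w := dlt k))"
  unfolding msg_strat_def by (auto simp: dlt_def)

lemma RBR_max:
  assumes R: "R_BR \<mu> uR \<sigma> \<rho>" and A: "act_strat \<rho>" and pos: "\<rho> m a > 0"
  shows "PS \<mu> uR \<sigma> m c \<le> PS \<mu> uR \<sigma> m a"
proof (rule ccontr)
  assume "\<not> ?thesis"
  then have lt: "PS \<mu> uR \<sigma> m a < PS \<mu> uR \<sigma> m c" by simp
  obtain cs where cs: "\<forall>y. PS \<mu> uR \<sigma> m y \<le> PS \<mu> uR \<sigma> m cs" using ex_max[of "PS \<mu> uR \<sigma> m"] by blast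
  have nn: "\<forall>b\<in>UNIV. 0 \<le> \<rho> m b * (PS \<mu> uR \<sigma> m cs - PS \<mu> uR \<sigma> m b)"
    using A cs unfolding act_strat_def by auto
  have "0 < \<rho> m a * (PS \<mu> uR \<sigma> m cs - PS \<mu> uR \<sigma> m a)"
    using pos lt cs[rule_format, of c] by (intro mult_pos_pos) auto
  also have "\<dots> \<le> (\<Sum>b\<in>UNIV. \<rho> m b * (PS \<mu> uR \<sigma> m cs - PS \<mu> uR \<sigma> m b))"
    by (rule member_le_sum) (use nn in auto)
  also have "\<dots> = PS \<mu> uR \<sigma> m cs - (\<Sum>b\<in>UNIV. \<rho> m b * PS \<mu> uR \<sigma> m b)"
    using A unfolding act_strat_def
    by (simp add: algebra_simps sum_subtractf sum_distrib_right[symmetric])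
  finally have "U \<mu> uR \<sigma> \<rho> < U \<mu> uR \<sigma> (\<rho>(m := dlt cs))"
    unfolding U_rho_upd by simp
  moreover have "U \<mu> uR \<sigma> (\<rho>(m := dlt cs)) \<le> U \<mu> uR \<sigma> \<rho>"
    using R act_strat_upd[OF A] unfolding R_BR_def by blast
  ultimately show False by simp
qed

lemma SBR_max:
  assumes S: "S_BR \<mu> uS \<sigma> \<rho>" and M: "msg_strat \<sigma>" and mu: "\<mu> w > 0" and pos: "\<sigma> w m > 0"
  shows "VV uS \<rho> k w \<le> VV uS \<rho> m w"
proof (rule ccontr)
  assume "\<not> ?thesis"
  then have lt: "VV uS \<rho> m w < VV uS \<rho> k w" by simp
  obtain cs where cs: "\<forall>y. VV uS \<rho> y w \<le> VV uS \<rho> cs w" using ex_max[of "\<lambda>y. VV uS \<rho> y w"] by blast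
  have nn: "\<forall>b\<in>UNIV. 0 \<le> \<sigma> w b * (VV uS \<rho> cs w - VV uS \<rho> b w)"
    using M cs unfolding msg_strat_def by auto
  have "0 < \<sigma> w m * (VV uS \<rho> cs w - VV uS \<rho> m w)"
    using pos lt cs[rule_format, of k] by (intro mult_pos_pos) auto
  also have "\<dots> \<le> (\<Sum>b\<in>UNIV. \<sigma> w b * (VV uS \<rho> cs w - VV uS \<rho> b w))"
    by (rule member_le_sum) (use nn in auto)
  also have "\<dots> = VV uS \<rho> cs w - (\<Sum>b\<in>UNIV. \<sigma> w b * VV uS \<rho> b w)"
    using M unfolding msg_strat_def
    by (simp add: algebra_simps sum_subtractf sum_distrib_right[symmetric])
  finally have "0 < \<mu> w * (VV uS \<rho> cs w - (\<Sum>b\<in>UNIV. \<sigma> w b * VV uS \<rho> b w))"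
    using mu by simp
  then have "U \<mu> uS \<sigma> \<rho> < U \<mu> uS (\<sigma>(w := dlt cs)) \<rho>"
    unfolding U_sigma_upd by (simp add: algebra_simps)
  moreover have "U \<mu> uS (\<sigma>(w := dlt cs)) \<rho> \<le> U \<mu> uS \<sigma> \<rho>"
    using S msg_strat_upd[OF M] unfolding S_BR_def by blast
  ultimately show False by simp
qed

lemma RBR_intro:
  fixes \<sigma> :: "'w::finite \<Rightarrow> 'm::finite \<Rightarrow> real" and \<rho> :: "'m \<Rightarrow> 'a::finite \<Rightarrow> real"
  assumes A: "act_strat \<rho>"
    and mx: "\<And>m a c. \<rho> m a > 0 \<Longrightarrow> PS \<mu> uR \<sigma> m c \<le> PS \<mu> uR \<sigma> m a"
  shows "R_BR \<mu> uR \<sigma> \<rho>"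
  unfolding R_BR_def
proof (intro allI impI)
  fix \<rho>' :: "'m \<Rightarrow> 'a \<Rightarrow> real" assume A': "act_strat \<rho>'"
  define M where "M m = Max (range (PS \<mu> uR \<sigma> m))" for m
  have le: "PS \<mu> uR \<sigma> m c \<le> M m" for m c unfolding M_def by (rule Max_ge) auto
  have eq: "PS \<mu> uR \<sigma> m a = M m" if "\<rho> m a \<noteq> 0" for m a
  proof -
    have "\<rho> m a > 0" using that A unfolding act_strat_def by (metis less_eq_real_def)
    have "M m \<in> range (PS \<mu> uR \<sigma> m)" unfolding M_def by (rule Max_in) auto
    then obtain c where "M m = PS \<mu> uR \<sigma> m c" by auto
    then show ?thesis using mx[OF \<open>\<rho> m a > 0\<close>, of c] le[of m a] by simp
  qed
  have "U \<mu> uR \<sigma> \<rho>' \<le> (\<Sum>m\<in>UNIV. M m)"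
    unfolding U_PS by (intro sum_mono conv_le le) (use A' in \<open>auto simp: act_strat_def\<close>)
  also have "\<dots> = U \<mu> uR \<sigma> \<rho>"
    unfolding U_PS by (intro sum.cong refl conv_eq[symmetric] eq) (use A in \<open>auto simp: act_strat_def\<close>)
  finally show "U \<mu> uR \<sigma> \<rho>' \<le> U \<mu> uR \<sigma> \<rho>" .
qed

lemma SBR_intro:
  fixes \<sigma> :: "'w::finite \<Rightarrow> 'm::finite \<Rightarrow> real" and \<rho> :: "'m \<Rightarrow> 'a::finite \<Rightarrow> real"
  assumes M: "msg_strat \<sigma>" and mu: "\<And>w. \<mu> w > 0"
    and mx: "\<And>w m k. \<sigma> w m > 0 \<Longrightarrow> VV uS \<rho> k w \<le> VV uS \<rho> m w"
  shows "S_BR \<mu> uS \<sigma> \<rho>"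
  unfolding S_BR_def
proof (intro allI impI)
  fix \<sigma>' :: "'w \<Rightarrow> 'm \<Rightarrow> real" assume M': "msg_strat \<sigma>'"
  define X where "X w = Max ((\<lambda>m. VV uS \<rho> m w) ` UNIV)" for w
  have le: "VV uS \<rho> m w \<le> X w" for m w unfolding X_def by (rule Max_ge) auto
  have eq: "VV uS \<rho> m w = X w" if "\<sigma> w m \<noteq> 0" for m w
  proof -
    have "\<sigma> w m > 0" using that M unfolding msg_strat_def by (metis less_eq_real_def)
    have "X w \<in> range (\<lambda>m. VV uS \<rho> m w)" unfolding X_def by (rule Max_in) auto
    then obtain c where "X w = VV uS \<rho> c w" by auto
    then show ?thesis using mx[OF \<open>\<sigma> w m > 0\<close>, of c] le[of m w] by simp
  qed
  have "U \<mu> uS \<sigma>' \<rho> \<le> (\<Sum>w\<in>UNIV. \<mu> w * X w)"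
    unfolding U_VV
    by (intro sum_mono mult_left_mono conv_le le) (use M' mu in \<open>auto simp: msg_strat_def less_imp_le\<close>)
  also have "\<dots> = U \<mu> uS \<sigma> \<rho>"
    unfolding U_VV by (intro sum.cong refl arg_cong2[where f=times] conv_eq[symmetric] eq) (use M in \<open>auto simp: msg_strat_def\<close>)
  finally show "U \<mu> uS \<sigma>' \<rho> \<le> U \<mu> uS \<sigma> \<rho>" .
qed
definition optp :: "('w::finite \<Rightarrow> real) \<Rightarrow> ('a::finite \<Rightarrow> 'w \<Rightarrow> real) \<Rightarrow> ('a \<Rightarrow> 'w \<Rightarrow> real)
   \<Rightarrow> ('w \<Rightarrow> 'm::finite \<Rightarrow> real) \<Rightarrow> ('m \<Rightarrow> 'a \<Rightarrow> real) \<Rightarrow> bool" where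
  "optp \<mu> uS uR \<sigma> \<rho> \<longleftrightarrow> (\<forall>(\<sigma>'::'w \<Rightarrow> 'm \<Rightarrow> real) \<rho>'. profile \<sigma>' \<rho>' \<and> R_BR \<mu> uR \<sigma>' \<rho>' \<longrightarrow> U \<mu> uS \<sigma>' \<rho>' \<le> U \<mu> uS \<sigma> \<rho>)"

definition GG :: "('w::finite \<Rightarrow> real) \<Rightarrow> ('a::finite \<Rightarrow> 'w \<Rightarrow> real) \<Rightarrow> ('w \<Rightarrow> 'm::finite \<Rightarrow> real) \<Rightarrow> ('m \<Rightarrow> 'a \<Rightarrow> real) \<Rightarrow> 'm \<Rightarrow> real" where
  "GG \<mu> u \<sigma> \<rho> k = (\<Sum>a\<in>UNIV. \<rho> k a * PS \<mu> u \<sigma> k a)"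

lemma U_GG: "U \<mu> u \<sigma> \<rho> = (\<Sum>k\<in>UNIV. GG \<mu> u \<sigma> \<rho> k)"
  unfolding U_PS GG_def ..

lemma tieA:
  fixes \<sigma> :: "'w::finite \<Rightarrow> 'm::finite \<Rightarrow> real" and \<rho> :: "'m \<Rightarrow> 'a::finite \<Rightarrow> real"
  assumes P: "profile \<sigma> \<rho>" and R: "R_BR \<mu> uR \<sigma> \<rho>" and O: "optp \<mu> uS uR \<sigma> \<rho>"
    and pos: "\<rho> m a > 0"
  shows "PS \<mu> uS \<sigma> m a = GG \<mu> uS \<sigma> \<rho> m"
    and "\<And>c. (\<forall>c'. PS \<mu> uR \<sigma> m c' \<le> PS \<mu> uR \<sigma> m c) \<Longrightarrow> PS \<mu> uS \<sigma> m c \<le> GG \<mu> uS \<sigma> \<rho> m"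
proof -
  have A: "act_strat \<rho>" using P unfolding profile_def by simp
  have M: "msg_strat \<sigma>" using P unfolding profile_def by simp
  have key: "PS \<mu> uS \<sigma> m c \<le> GG \<mu> uS \<sigma> \<rho> m" if c: "\<forall>c'. PS \<mu> uR \<sigma> m c' \<le> PS \<mu> uR \<sigma> m c" for c
  proof -
    have "R_BR \<mu> uR \<sigma> (\<rho>(m := dlt c))"
    proof (rule RBR_intro[OF act_strat_upd[OF A]])
      fix k b c' assume "(\<rho>(m := dlt c)) k b > 0"
      then show "PS \<mu> uR \<sigma> k c' \<le> PS \<mu> uR \<sigma> k b"
        using RBR_max[OF R A] c by (cases "k = m") (auto simp: dlt_def split: if_splits)
    qed
    then have "U \<mu> uS \<sigma> (\<rho>(m := dlt c)) \<le> U \<mu> uS \<sigma> \<rho>"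
      using O M act_strat_upd[OF A] unfolding optp_def profile_def by blast
    then show ?thesis unfolding U_rho_upd GG_def by simp
  qed
  then show "\<And>c. (\<forall>c'. PS \<mu> uR \<sigma> m c' \<le> PS \<mu> uR \<sigma> m c) \<Longrightarrow> PS \<mu> uS \<sigma> m c \<le> GG \<mu> uS \<sigma> \<rho> m" by blast
  show "PS \<mu> uS \<sigma> m a = GG \<mu> uS \<sigma> \<rho> m"
    unfolding GG_def
  proof (rule conv_avg)
    show "\<And>b. 0 \<le> \<rho> m b" "sum (\<rho> m) UNIV = 1" using A unfolding act_strat_def by auto
    show "0 < \<rho> m a" by (rule pos)
    fix b assume "\<rho> m b > 0"
    then show "PS \<mu> uS \<sigma> m b \<le> (\<Sum>b\<in>UNIV. \<rho> m b * PS \<mu> uS \<sigma> m b)"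
      using key[unfolded GG_def] RBR_max[OF R A] by blast
  qed
qed

lemma PS_scale: "PS \<mu> u (\<lambda>w k. \<sigma> w k * f k) m a = f m * PS \<mu> u \<sigma> m a"
  unfolding PS_def sum_distrib_left by (intro sum.cong refl) (simp add: algebra_simps)

lemma scale_profile:
  fixes \<sigma> :: "'w::finite \<Rightarrow> 'm::finite \<Rightarrow> real" and \<rho> :: "'m \<Rightarrow> 'a::finite \<Rightarrow> real"
  assumes P: "profile \<sigma> \<rho>" and R: "R_BR \<mu> uR \<sigma> \<rho>" and f0: "\<And>k. f k \<ge> 0"
    and f1: "\<And>w. (\<Sum>k\<in>UNIV. \<sigma> w k * f k) = 1"
  shows "profile (\<lambda>w k. \<sigma> w k * f k) \<rho>" "R_BR \<mu> uR (\<lambda>w k. \<sigma> w k * f k) \<rho>"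
    "U \<mu> u (\<lambda>w k. \<sigma> w k * f k) \<rho> = (\<Sum>k\<in>UNIV. f k * GG \<mu> u \<sigma> \<rho> k)"
proof -
  have A: "act_strat \<rho>" using P unfolding profile_def by simp
  have M: "msg_strat \<sigma>" using P unfolding profile_def by simp
  show "profile (\<lambda>w k. \<sigma> w k * f k) \<rho>"
    using A M f0 f1 unfolding profile_def msg_strat_def by auto
  show "R_BR \<mu> uR (\<lambda>w k. \<sigma> w k * f k) \<rho>"
  proof (rule RBR_intro[OF A])
    fix m a c assume "\<rho> m a > 0"
    then show "PS \<mu> uR (\<lambda>w k. \<sigma> w k * f k) m c \<le> PS \<mu> uR (\<lambda>w k. \<sigma> w k * f k) m a"
      unfolding PS_scale using RBR_max[OF R A] f0 by (simp add: mult_left_mono)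
  qed
  show "U \<mu> u (\<lambda>w k. \<sigma> w k * f k) \<rho> = (\<Sum>k\<in>UNIV. f k * GG \<mu> u \<sigma> \<rho> k)"
    unfolding U_GG GG_def PS_scale sum_distrib_left by (intro sum.cong refl) (simp add: algebra_simps)
qed

lemma sum_dlt_scaleR[simp]: "(\<Sum>y\<in>UNIV. dlt (x::'a::finite) y *\<^sub>R (f y::'b::real_vector)) = f x"
proof -
  have "(\<Sum>y\<in>UNIV. dlt x y *\<^sub>R f y) = (\<Sum>y\<in>UNIV. if y = x then f y else 0)"
    by (rule sum.cong) (auto simp: dlt_def)
  then show ?thesis by (simp add: sum.delta)
qed

lemma dep:
  fixes q :: "'m::finite \<Rightarrow> real^'w::finite"
  assumes "CARD('m) > CARD('w)"
  shows "\<exists>c. (\<exists>k. c k \<noteq> 0) \<and> (\<Sum>k\<in>UNIV. c k *\<^sub>R q k) = 0"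
proof (cases "inj q")
  case False
  then obtain k1 k2 where k: "k1 \<noteq> k2" "q k1 = q k2" unfolding inj_def by auto
  define c where "c k = dlt k1 k - dlt k2 k" for k
  have "(\<Sum>k\<in>UNIV. c k *\<^sub>R q k) = q k1 - q k2"
    unfolding c_def scaleR_left_diff_distrib sum_subtractf by simp
  moreover have "c k1 \<noteq> 0" using k by (simp add: c_def dlt_def)
  ultimately show ?thesis using k by auto
next
  case True
  have "card (range q) = CARD('m)" using True by (simp add: card_image)
  then have "dependent (range q)"
    using assms by (intro dependent_biggerset) simp
  then obtain u where u: "\<exists>v\<in>range q. u v \<noteq> 0" "(\<Sum>v\<in>range q. u v *\<^sub>R v) = 0"
    using real_vector.dependent_finite[of "range q"] by auto
  have "(\<Sum>k\<in>UNIV. u (q k) *\<^sub>R q k) = (\<Sum>v\<in>range q. u v *\<^sub>R v)"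
    using sum.reindex[OF True, of "\<lambda>v. u v *\<^sub>R v"] by simp
  then show ?thesis using u by (intro exI[of _ "\<lambda>k. u (q k)"]) auto
qed


lemma RSC:
  fixes \<sigma> :: "'w::finite \<Rightarrow> 'm::finite \<Rightarrow> real" and \<rho> :: "'m \<Rightarrow> 'a::finite \<Rightarrow> real"
  assumes mu: "\<And>w. \<mu> w > 0" and P: "profile \<sigma> \<rho>" and R: "R_BR \<mu> uR \<sigma> \<rho>"
    and O: "optp \<mu> uS uR \<sigma> \<rho>" and used: "\<And>k. \<exists>w. \<sigma> w k > 0"
    and card: "CARD('m) > CARD('w)"
  shows "\<exists>\<sigma>1. profile \<sigma>1 \<rho> \<and> R_BR \<mu> uR \<sigma>1 \<rho> \<and> U \<mu> uS \<sigma>1 \<rho> = U \<mu> uS \<sigma> \<rho>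
      \<and> (\<exists>k'. k' \<noteq> m \<and> (\<forall>w. \<sigma>1 w k' = 0)) \<and> (\<forall>w. \<sigma> w m > 0 \<longrightarrow> \<sigma>1 w m > 0)"
proof -
  have M: "msg_strat \<sigma>" using P unfolding profile_def by simp
  define q where "q k = (\<chi> w. \<mu> w * \<sigma> w k)" for k
  obtain c0 where c0: "\<exists>k. c0 k \<noteq> 0" "(\<Sum>k\<in>UNIV. c0 k *\<^sub>R q k) = 0"
    using dep[OF card, of q] by blast
  define c where "c = (if c0 m \<ge> 0 then c0 else (\<lambda>k. - c0 k))"
  have cm: "c m \<ge> 0" by (simp add: c_def)
  have cnz: "\<exists>k. c k \<noteq> 0" using c0(1) by (auto simp: c_def)
  have csum: "(\<Sum>k\<in>UNIV. c k *\<^sub>R q k) = 0"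
    using c0(2) by (auto simp: c_def sum_negf)
  have csw: "(\<Sum>k\<in>UNIV. \<sigma> w k * c k) = 0" for w
  proof -
    have "(\<Sum>k\<in>UNIV. c k *\<^sub>R q k) $ w = 0" using csum by simp
    then have "(\<Sum>k\<in>UNIV. c k * (\<mu> w * \<sigma> w k)) = 0" by (simp add: q_def)
    then have "\<mu> w * (\<Sum>k\<in>UNIV. \<sigma> w k * c k) = 0"
      by (simp add: sum_distrib_left algebra_simps)
    then show ?thesis using mu[of w] by simp
  qed
  have negex: "\<exists>k. c k < 0"
  proof (rule ccontr)
    assume "\<not> ?thesis"
    then have nn: "\<And>k. c k \<ge> 0" by (simp add: not_less)
    obtain k1 where "c k1 \<noteq> 0" using cnz by blast
    then have k1: "c k1 > 0" using nn[of k1] by simp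
    obtain w1 where w1: "\<sigma> w1 k1 > 0" using used by blast
    have "0 < \<sigma> w1 k1 * c k1" using k1 w1 by simp
    also have "\<dots> \<le> (\<Sum>k\<in>UNIV. \<sigma> w1 k * c k)"
      by (rule member_le_sum) (use M nn in \<open>auto simp: msg_strat_def\<close>)
    finally show False using csw by simp
  qed
  define GS where "GS k = GG \<mu> uS \<sigma> \<rho> k" for k
  have slope: "(\<Sum>k\<in>UNIV. c k * GS k) = 0"
  proof (rule ccontr)
    assume L: "(\<Sum>k\<in>UNIV. c k * GS k) \<noteq> 0"
    define Mx where "Mx = Max (range (\<lambda>k. \<bar>c k\<bar>)) + 1"
    have cle: "\<bar>c k\<bar> \<le> Mx - 1" for k unfolding Mx_def by (simp add: Max_ge)
    have Mx0: "Mx > 0" using cle[of m] by simp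
    define \<epsilon> where "\<epsilon> = (if (\<Sum>k\<in>UNIV. c k * GS k) > 0 then 1 else -1) / Mx"
    define f where "f k = 1 + \<epsilon> * c k" for k
    have f0: "f k \<ge> 0" for k
    proof -
      have "\<bar>\<epsilon> * c k\<bar> = \<bar>c k\<bar> / Mx" using Mx0 by (simp add: \<epsilon>_def abs_mult)
      also have "\<dots> \<le> 1" using cle[of k] Mx0 by simp
      finally show ?thesis unfolding f_def by linarith
    qed
    have f1: "(\<Sum>k\<in>UNIV. \<sigma> w k * f k) = 1" for w
    proof -
      have "(\<Sum>k\<in>UNIV. \<sigma> w k * f k) = (\<Sum>k\<in>UNIV. \<sigma> w k) + \<epsilon> * (\<Sum>k\<in>UNIV. \<sigma> w k * c k)"
        unfolding f_def by (simp add: algebra_simps sum.distrib sum_distrib_left)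
      then show ?thesis using csw M unfolding msg_strat_def by simp
    qed
    note sp = scale_profile[OF P R f0 f1]
    have "U \<mu> uS (\<lambda>w k. \<sigma> w k * f k) \<rho> = (\<Sum>k\<in>UNIV. f k * GS k)"
      using sp(3) by (simp add: GS_def)
    also have "\<dots> = U \<mu> uS \<sigma> \<rho> + \<epsilon> * (\<Sum>k\<in>UNIV. c k * GS k)"
      unfolding U_GG f_def GS_def by (simp add: algebra_simps sum.distrib sum_distrib_left)
    finally have "U \<mu> uS (\<lambda>w k. \<sigma> w k * f k) \<rho> = U \<mu> uS \<sigma> \<rho> + \<epsilon> * (\<Sum>k\<in>UNIV. c k * GS k)" .
    moreover have "\<epsilon> * (\<Sum>k\<in>UNIV. c k * GS k) > 0"
      using L Mx0 by (auto simp: \<epsilon>_def divide_simps)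
    moreover have "U \<mu> uS (\<lambda>w k. \<sigma> w k * f k) \<rho> \<le> U \<mu> uS \<sigma> \<rho>"
      using O sp(1,2) unfolding optp_def by blast
    ultimately show False by simp
  qed
  define tt where "tt = Max (range (\<lambda>k. - c k))"
  obtain ks where ks: "- c ks = tt"
  proof -
    have "tt \<in> range (\<lambda>k. - c k)" unfolding tt_def by (rule Max_in) auto
    then show ?thesis using that by auto
  qed
  have tge: "- c k \<le> tt" for k unfolding tt_def by (simp add: Max_ge)
  have tpos: "tt > 0"
  proof -
    obtain k where "c k < 0" using negex by blast
    then show ?thesis using tge[of k] by linarith
  qed
  have ksm: "ks \<noteq> m" using ks tpos cm by auto
  define f where "f k = 1 + c k / tt" for k
  have f0: "f k \<ge> 0" for k
    using tge[of k] tpos unfolding f_def by (simp add: field_simps)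
  have f1: "(\<Sum>k\<in>UNIV. \<sigma> w k * f k) = 1" for w
  proof -
    have "(\<Sum>k\<in>UNIV. \<sigma> w k * f k) = (\<Sum>k\<in>UNIV. \<sigma> w k) + (\<Sum>k\<in>UNIV. \<sigma> w k * c k) / tt"
      unfolding f_def by (simp add: algebra_simps sum.distrib sum_divide_distrib)
    then show ?thesis using csw M unfolding msg_strat_def by simp
  qed
  note sp = scale_profile[OF P R f0 f1]
  have "U \<mu> uS (\<lambda>w k. \<sigma> w k * f k) \<rho> = (\<Sum>k\<in>UNIV. f k * GS k)"
    using sp(3) by (simp add: GS_def)
  also have "\<dots> = U \<mu> uS \<sigma> \<rho> + (\<Sum>k\<in>UNIV. c k * GS k) / tt"
    unfolding U_GG f_def GS_def by (simp add: algebra_simps sum.distrib sum_divide_distrib)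
  finally have "U \<mu> uS (\<lambda>w k. \<sigma> w k * f k) \<rho> = U \<mu> uS \<sigma> \<rho> + (\<Sum>k\<in>UNIV. c k * GS k) / tt" .
  then have Ueq: "U \<mu> uS (\<lambda>w k. \<sigma> w k * f k) \<rho> = U \<mu> uS \<sigma> \<rho>" using slope by simp
  have fks: "f ks = 0" using ks tpos unfolding f_def by (simp add: field_simps)
  have fm: "f m \<ge> 1" using cm tpos unfolding f_def by simp
  show ?thesis
    apply (rule exI[of _ "\<lambda>w k. \<sigma> w k * f k"])
    using sp(1,2) Ueq fks ksm fm by auto
qed


definition phiv :: "('a \<Rightarrow> 'w::finite \<Rightarrow> real) \<Rightarrow> 'w set \<Rightarrow> 'a \<Rightarrow> 'a \<Rightarrow> real^'w" where
  "phiv u T a c = (\<chi> w. if w \<in> T then u c w - u a w else 0)"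

lemma phiv_inner_supp:
  assumes "\<And>w. w \<notin> T \<Longrightarrow> d $ w = 0"
  shows "phiv u T a c \<bullet> d = (\<Sum>w\<in>UNIV. d $ w * u c w) - (\<Sum>w\<in>UNIV. d $ w * u a w)"
proof -
  have "phiv u T a c \<bullet> d = (\<Sum>w\<in>UNIV. d $ w * u c w - d $ w * u a w)"
    unfolding inner_vec_def phiv_def using assms by (intro sum.cong refl) (auto simp: algebra_simps)
  then show ?thesis by (simp add: sum_subtractf)
qed

lemma vec_in_span_axis:
  fixes v :: "real^'w::finite"
  assumes "\<And>w. w \<notin> T \<Longrightarrow> v $ w = 0"
  shows "v \<in> span ((\<lambda>w. axis w 1) ` T)"
proof -
  have "v = (\<Sum>w\<in>T. v $ w *\<^sub>R axis w 1)"
  proof (rule vec_eq_iff[THEN iffD2], rule allI)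
    fix i
    have "(\<Sum>w\<in>T. v $ w *\<^sub>R axis w (1::real)) $ i = (\<Sum>w\<in>T. if w = i then v $ i else 0)"
      unfolding sum_component by (intro sum.cong refl) (auto simp: axis_def)
    also have "\<dots> = v $ i" using assms[of i] by (simp add: sum.delta')
    finally show "v $ i = (\<Sum>w\<in>T. v $ w *\<^sub>R axis w 1) $ i" by simp
  qed
  also have "\<dots> \<in> span ((\<lambda>w. axis w 1) ` T)"
    by (intro span_sum span_scale span_base) auto
  finally show ?thesis .
qed

lemma card_indep_supp:
  fixes S :: "(real^'w::finite) set"
  assumes "independent S" "\<And>v w. v \<in> S \<Longrightarrow> w \<notin> T \<Longrightarrow> v $ w = 0"
  shows "card S \<le> card T"
proof -
  have "S \<subseteq> span ((\<lambda>w. axis w (1::real)) ` T)" using vec_in_span_axis assms(2) by blast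
  then have "card S \<le> dim (span ((\<lambda>w. axis w (1::real)) ` T))"
    using independent_card_le_dim assms(1) by blast
  also have "\<dots> \<le> card ((\<lambda>w. axis w (1::real)) ` T)"
    by (rule dim_le_card) auto
  also have "\<dots> \<le> card T" by (rule card_image_le) simp
  finally show ?thesis .
qed

lemma eps_ex:
  fixes A Bn :: "'i \<Rightarrow> real"
  assumes "finite I" "\<And>i. i \<in> I \<Longrightarrow> Bn i > 0"
  shows "\<exists>\<epsilon>>0. \<forall>\<epsilon>'. 0 \<le> \<epsilon>' \<and> \<epsilon>' \<le> \<epsilon> \<longrightarrow> (\<forall>i\<in>I. \<epsilon>' * \<bar>A i\<bar> \<le> Bn i)"
proof -
  define \<epsilon> where "\<epsilon> = Min (insert 1 ((\<lambda>i. Bn i / (\<bar>A i\<bar> + 1)) ` I))"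
  have pos: "\<epsilon> > 0" unfolding \<epsilon>_def using assms
    by (subst Min_gr_iff) (auto intro!: divide_pos_pos)
  have le: "\<epsilon> \<le> Bn i / (\<bar>A i\<bar> + 1)" if "i \<in> I" for i
    unfolding \<epsilon>_def using assms(1) that by (intro Min_le) auto
  show ?thesis
  proof (intro exI conjI allI impI ballI)
    show "\<epsilon> > 0" by (rule pos)
    fix \<epsilon>' i assume e: "0 \<le> \<epsilon>' \<and> \<epsilon>' \<le> \<epsilon>" and i: "i \<in> I"
    have "\<epsilon>' * \<bar>A i\<bar> \<le> \<epsilon> * (\<bar>A i\<bar> + 1)" using e pos by (intro mult_mono) auto
    also have "\<dots> \<le> Bn i" using le[OF i] by (simp add: field_simps)
    finally show "\<epsilon>' * \<bar>A i\<bar> \<le> Bn i" .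
  qed
qed


lemma SPL:
  fixes \<sigma> :: "'w::finite \<Rightarrow> 'm::finite \<Rightarrow> real" and \<rho> :: "'m \<Rightarrow> 'a::finite \<Rightarrow> real"
  assumes mu: "\<And>w. \<mu> w > 0" and P: "profile \<sigma> \<rho>" and R: "R_BR \<mu> uR \<sigma> \<rho>"
    and O: "optp \<mu> uS uR \<sigma> \<rho>" and w0: "\<sigma> w0 m > 0"
    and ab: "a \<noteq> b" "\<rho> m a > 0" "\<rho> m b > 0"
    and m': "m' \<noteq> m" "\<And>w. \<sigma> w m' = 0"
    and T: "T = {w. \<sigma> w m > 0}"
    and genS: "\<And>C. a \<notin> C \<Longrightarrow> card C < card T \<Longrightarrow> phiv uS T b a \<notin> span (phiv uR T a ` C)"
    and genI: "\<And>c0 C. c0 \<noteq> a \<Longrightarrow> a \<notin> C \<Longrightarrow> c0 \<notin> C \<Longrightarrow> card C < card T \<Longrightarrow> phiv uR T a c0 \<notin> span (phiv uR T a ` C)"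
  shows False
proof -
  have A: "act_strat \<rho>" using P unfolding profile_def by simp
  have M: "msg_strat \<sigma>" using P unfolding profile_def by simp
  have offT: "\<sigma> w m = 0" if "w \<notin> T" for w
  proof -
    have "\<sigma> w m \<ge> 0" using M unfolding msg_strat_def by blast
    moreover have "\<not> \<sigma> w m > 0" using that T by blast
    ultimately show ?thesis by linarith
  qed
  define B where "B = {c. \<forall>c'. PS \<mu> uR \<sigma> m c' \<le> PS \<mu> uR \<sigma> m c}"
  have aB: "a \<in> B" unfolding B_def using RBR_max[OF R A ab(2)] by blast
  have bB: "b \<in> B" unfolding B_def using RBR_max[OF R A ab(3)] by blast
  have PSB: "PS \<mu> uR \<sigma> m c = PS \<mu> uR \<sigma> m a" if "c \<in> B" for c
  proof -
    have "PS \<mu> uR \<sigma> m a \<le> PS \<mu> uR \<sigma> m c" using that unfolding B_def by blast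
    moreover have "PS \<mu> uR \<sigma> m c \<le> PS \<mu> uR \<sigma> m a" using aB unfolding B_def by blast
    ultimately show ?thesis by linarith
  qed
  have PSnB: "PS \<mu> uR \<sigma> m c < PS \<mu> uR \<sigma> m a" if cB: "c \<notin> B" for c
  proof -
    obtain c' where "\<not> PS \<mu> uR \<sigma> m c' \<le> PS \<mu> uR \<sigma> m c" using cB unfolding B_def by blast
    moreover have "PS \<mu> uR \<sigma> m c' \<le> PS \<mu> uR \<sigma> m a" using aB unfolding B_def by blast
    ultimately show ?thesis by linarith
  qed
  define \<phi> where "\<phi> = phiv uR T a"
  define q where "q = (\<chi> w. \<mu> w * \<sigma> w m)"
  have qsupp: "q $ w = 0" if "w \<notin> T" for w using offT[OF that] by (simp add: q_def)
  have qnz: "q \<noteq> 0"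
  proof
    assume "q = 0"
    then have "q $ w0 = 0" by simp
    then show False using mu[of w0] w0 by (simp add: q_def)
  qed
  have qorth: "orthogonal q (\<phi> c)" if "c \<in> B" for c
  proof -
    have "\<phi> c \<bullet> q = (\<Sum>w\<in>UNIV. q $ w * uR c w) - (\<Sum>w\<in>UNIV. q $ w * uR a w)"
      unfolding \<phi>_def by (rule phiv_inner_supp) (rule qsupp)
    also have "\<dots> = PS \<mu> uR \<sigma> m c - PS \<mu> uR \<sigma> m a" by (simp add: q_def PS_def)
    also have "\<dots> = 0" using PSB[OF that] by simp
    finally show ?thesis by (simp add: orthogonal_def inner_commute)
  qed
  have phisupp: "\<phi> c $ w = 0" if "w \<notin> T" for c w using that by (simp add: \<phi>_def phiv_def)
  have finT: "finite T" by simp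
  have notspan: "phiv uS T b a \<notin> span (\<phi> ` (B - {a}))"
  proof (cases "card (B - {a}) < card T")
    case True
    have "a \<notin> B - {a}" by blast
    from genS[OF this True] show ?thesis unfolding \<phi>_def .
  next
    case False
    then have "card T \<le> card (B - {a})" by simp
    then obtain D where D: "D \<subseteq> B - {a}" "card D = card T" "finite D"
      by (rule obtain_subset_with_card_n)
    have ind: "independent (\<phi> ` F) \<and> card (\<phi> ` F) = card F" if "F \<subseteq> D" for F
      using finite_subset[OF that D(3)] that
    proof (induction F rule: finite_subset_induct')
      case empty
      then show ?case by (simp add: independent_empty)
    next
      case (insert x F)
      have "F \<subset> D" using insert.hyps(2,3,4) by blast
      then have cF: "card F < card T" using psubset_card_mono[OF D(3)] D(2) by simp
      have xa: "x \<noteq> a" using insert.hyps(2) D(1) by blast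
      have aF: "a \<notin> F" using insert.hyps(3) D(1) by blast
      have ns: "\<phi> x \<notin> span (\<phi> ` F)" unfolding \<phi>_def
        by (rule genI[OF xa aF insert.hyps(4) cF])
      have ni: "\<phi> x \<notin> \<phi> ` F"
      proof
        assume "\<phi> x \<in> \<phi> ` F"
        then have "\<phi> x \<in> span (\<phi> ` F)" by (rule span_base)
        with ns show False by simp
      qed
      have i1: "independent (insert (\<phi> x) (\<phi> ` F))" by (rule independent_insertI[OF ns conjunct1[OF insert.IH]])
      have c1: "card (insert (\<phi> x) (\<phi> ` F)) = Suc (card (\<phi> ` F))"
        by (rule card_insert_disjoint[OF finite_imageI[OF insert.hyps(1)] ni])
      have c2: "card (insert x F) = Suc (card F)" by (rule card_insert_disjoint[OF insert.hyps(1) insert.hyps(4)])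
      have "card (insert (\<phi> x) (\<phi> ` F)) = card (insert x F)"
        using c1 c2 conjunct2[OF insert.IH] by linarith
      then show ?case unfolding image_insert by (rule conjI[OF i1])
    qed
    have qns: "q \<notin> span (\<phi> ` D)"
    proof
      assume "q \<in> span (\<phi> ` D)"
      then have "orthogonal q q"
        by (rule orthogonal_to_span) (use qorth D(1) in blast)
      then show False using qnz unfolding orthogonal_def by simp
    qed
    have "independent (insert q (\<phi> ` D))" by (rule independent_insertI[OF qns conjunct1[OF ind[OF order_refl]]])
    then have "card (insert q (\<phi> ` D)) \<le> card T"
    proof (rule card_indep_supp)
      fix v w assume vv: "v \<in> insert q (\<phi> ` D)" and "w \<notin> T"
      from vv show "v $ w = 0"
      proof (rule insertE)
        assume "v = q" then show ?thesis using qsupp[OF \<open>w \<notin> T\<close>] by simp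
      next
        assume "v \<in> \<phi> ` D" then obtain c where "v = \<phi> c" by blast
        then show ?thesis using phisupp[OF \<open>w \<notin> T\<close>] by simp
      qed
    qed
    moreover have "card (insert q (\<phi> ` D)) = card T + 1"
    proof -
      have "q \<notin> \<phi> ` D"
      proof
        assume "q \<in> \<phi> ` D"
        then have "q \<in> span (\<phi> ` D)" by (rule span_base)
        with qns show False by simp
      qed
      then have "card (insert q (\<phi> ` D)) = Suc (card (\<phi> ` D))" using D(3) by simp
      then show ?thesis using ind[OF order_refl] D(2) by simp
    qed
    ultimately show ?thesis by simp
  qed
  define \<psi> where "\<psi> = phiv uS T b a"
  obtain y z where yz: "y \<in> span (\<phi> ` (B - {a}))" "\<And>v. v \<in> span (\<phi> ` (B - {a})) \<Longrightarrow> orthogonal z v" "\<psi> = y + z"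
    using orthogonal_subspace_decomp_exists by blast
  have znz: "z \<noteq> 0" using yz notspan unfolding \<psi>_def by auto
  have "\<psi> \<bullet> z = z \<bullet> z" using yz(2)[OF yz(1)] yz(3) by (simp add: inner_add_left inner_add_right orthogonal_def inner_commute)
  then have psiz: "\<psi> \<bullet> z > 0" using znz by simp
  define d where "d = (\<chi> w. if w \<in> T then z $ w else 0)"
  have dsupp: "d $ w = 0" if "w \<notin> T" for w using that by (simp add: d_def)
  have inner_d: "phiv u T x y' \<bullet> d = phiv u T x y' \<bullet> z" for u x y'
    unfolding inner_vec_def by (intro sum.cong refl) (simp add: d_def phiv_def)
  define Dr where "Dr c = (\<Sum>w\<in>UNIV. d $ w * uR c w)" for c
  define Ds where "Ds c = (\<Sum>w\<in>UNIV. d $ w * uS c w)" for c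
  have DrB: "Dr c = Dr a" if "c \<in> B" for c
  proof (cases "c = a")
    case False
    then have "\<phi> c \<in> span (\<phi> ` (B - {a}))" using that by (intro span_base) auto
    then have "z \<bullet> \<phi> c = 0" using yz(2) by (simp add: orthogonal_def)
    then have "\<phi> c \<bullet> d = 0" unfolding \<phi>_def inner_d by (simp add: inner_commute)
    then show ?thesis using phiv_inner_supp[OF dsupp, where u=uR and a=a and c=c] unfolding \<phi>_def Dr_def by simp
  qed simp
  have Dsab: "Ds a - Ds b > 0"
  proof -
    have "\<psi> \<bullet> d = Ds a - Ds b" unfolding \<psi>_def Ds_def by (rule phiv_inner_supp[OF dsupp])
    moreover have "\<psi> \<bullet> d = \<psi> \<bullet> z" unfolding \<psi>_def inner_d ..
    ultimately show ?thesis using psiz by simp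
  qed
  obtain e1 where e1: "e1 > 0" "\<And>\<epsilon>'. 0 \<le> \<epsilon>' \<Longrightarrow> \<epsilon>' \<le> e1 \<Longrightarrow> (\<forall>w\<in>T. \<epsilon>' * \<bar>d $ w / \<mu> w\<bar> \<le> \<sigma> w m / 2)"
    using eps_ex[of T "\<lambda>w. \<sigma> w m / 2" "\<lambda>w. d $ w / \<mu> w"] T by auto
  obtain e2 where e2: "e2 > 0" "\<And>\<epsilon>'. 0 \<le> \<epsilon>' \<Longrightarrow> \<epsilon>' \<le> e2 \<Longrightarrow> (\<forall>c\<in>-B. \<epsilon>' * \<bar>Dr c - Dr a\<bar> \<le> (PS \<mu> uR \<sigma> m a - PS \<mu> uR \<sigma> m c) / 2)"
    using eps_ex[of "-B" "\<lambda>c. (PS \<mu> uR \<sigma> m a - PS \<mu> uR \<sigma> m c) / 2" "\<lambda>c. Dr c - Dr a"] PSnB by auto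
  obtain e3 where e3: "e3 > 0" "\<And>\<epsilon>'. 0 \<le> \<epsilon>' \<Longrightarrow> \<epsilon>' \<le> e3 \<Longrightarrow> (\<forall>c\<in>-B. \<epsilon>' * \<bar>Dr b - Dr c\<bar> \<le> (PS \<mu> uR \<sigma> m a - PS \<mu> uR \<sigma> m c) / 2)"
    using eps_ex[of "-B" "\<lambda>c. (PS \<mu> uR \<sigma> m a - PS \<mu> uR \<sigma> m c) / 2" "\<lambda>c. Dr b - Dr c"] PSnB by auto
  define \<epsilon> where "\<epsilon> = min e1 (min e2 e3)"
  have epos: "\<epsilon> > 0" using e1 e2 e3 by (simp add: \<epsilon>_def)
  have E1: "\<forall>w\<in>T. \<epsilon> * \<bar>d $ w / \<mu> w\<bar> \<le> \<sigma> w m / 2" using e1(2)[of \<epsilon>] epos by (simp add: \<epsilon>_def)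
  have E2: "\<forall>c\<in>-B. \<epsilon> * \<bar>Dr c - Dr a\<bar> \<le> (PS \<mu> uR \<sigma> m a - PS \<mu> uR \<sigma> m c) / 2" using e2(2)[of \<epsilon>] epos by (simp add: \<epsilon>_def)
  have E3: "\<forall>c\<in>-B. \<epsilon> * \<bar>Dr b - Dr c\<bar> \<le> (PS \<mu> uR \<sigma> m a - PS \<mu> uR \<sigma> m c) / 2" using e3(2)[of \<epsilon>] epos by (simp add: \<epsilon>_def)
  define e where "e w = \<epsilon> * d $ w / \<mu> w" for w
  have ebound: "\<bar>e w\<bar> \<le> \<sigma> w m / 2" for w
  proof (cases "w \<in> T")
    case True
    then show ?thesis using E1 epos by (simp add: e_def abs_mult)
  next
    case False
    then show ?thesis using dsupp[OF False] M by (simp add: e_def msg_strat_def)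
  qed
  define \<sigma>' where "\<sigma>' w k = \<sigma> w k + (if k = m then e w - \<sigma> w m / 2 else 0) + (if k = m' then \<sigma> w m / 2 - e w else 0)" for w k
  have s'm: "\<sigma>' w m = \<sigma> w m / 2 + e w" for w using m' by (simp add: \<sigma>'_def)
  have s'm': "\<sigma>' w m' = \<sigma> w m / 2 - e w" for w using m' by (simp add: \<sigma>'_def)
  have s'k: "\<sigma>' w k = \<sigma> w k" if "k \<noteq> m" "k \<noteq> m'" for w k using that by (simp add: \<sigma>'_def)
  have M': "msg_strat \<sigma>'"
    unfolding msg_strat_def
  proof (intro conjI allI)
    fix w k show "0 \<le> \<sigma>' w k"
    proof -
      have eb: "- (\<sigma> w m / 2) \<le> e w" "e w \<le> \<sigma> w m / 2" using ebound[of w] by (auto simp: abs_le_iff)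
      show ?thesis
      proof (cases "k = m")
        case True then show ?thesis using s'm[of w] eb by simp
      next
        case False
        show ?thesis
        proof (cases "k = m'")
          case True then show ?thesis using s'm'[of w] eb by simp
        next
          case False
          then show ?thesis using s'k[OF \<open>k \<noteq> m\<close> False, of w] M unfolding msg_strat_def by simp
        qed
      qed
    qed
  next
    fix w
    have "(\<Sum>k\<in>UNIV. \<sigma>' w k) = (\<Sum>k\<in>UNIV. \<sigma> w k) + (e w - \<sigma> w m / 2) + (\<sigma> w m / 2 - e w)"
      unfolding \<sigma>'_def by (simp add: sum.distrib)
    then show "(\<Sum>k\<in>UNIV. \<sigma>' w k) = 1" using M unfolding msg_strat_def by simp
  qed
  define \<rho>' where "\<rho>' = \<rho>(m := dlt a, m' := dlt b)"
  have A': "act_strat \<rho>'" unfolding \<rho>'_def by (intro act_strat_upd A)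
  have pert: "\<mu> w * (\<sigma> w m / 2 + s * e w) * u c w = \<mu> w * \<sigma> w m * u c w / 2 + s * \<epsilon> * (d $ w * u c w)" for w s u c
    using mu[of w] by (simp add: e_def field_simps)
  have PSm: "PS \<mu> u \<sigma>' m c = PS \<mu> u \<sigma> m c / 2 + \<epsilon> * (\<Sum>w\<in>UNIV. d $ w * u c w)" for u c
  proof -
    have "PS \<mu> u \<sigma>' m c = (\<Sum>w\<in>UNIV. \<mu> w * (\<sigma> w m / 2 + 1 * e w) * u c w)" by (simp add: PS_def s'm)
    also have "\<dots> = PS \<mu> u \<sigma> m c / 2 + \<epsilon> * (\<Sum>w\<in>UNIV. d $ w * u c w)"
      unfolding pert by (simp add: PS_def sum.distrib sum_divide_distrib sum_distrib_left)
    finally show ?thesis .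
  qed
  have PSm': "PS \<mu> u \<sigma>' m' c = PS \<mu> u \<sigma> m c / 2 - \<epsilon> * (\<Sum>w\<in>UNIV. d $ w * u c w)" for u c
  proof -
    have "PS \<mu> u \<sigma>' m' c = (\<Sum>w\<in>UNIV. \<mu> w * (\<sigma> w m / 2 + (-1) * e w) * u c w)" by (simp add: PS_def s'm')
    also have "\<dots> = PS \<mu> u \<sigma> m c / 2 - \<epsilon> * (\<Sum>w\<in>UNIV. d $ w * u c w)"
      unfolding pert by (simp add: PS_def sum_subtractf sum_divide_distrib sum_distrib_left)
    finally show ?thesis .
  qed
  have PSk: "PS \<mu> u \<sigma>' k c = PS \<mu> u \<sigma> k c" if "k \<noteq> m" "k \<noteq> m'" for u k c
    using that by (simp add: PS_def s'k)
  have PSb: "PS \<mu> uR \<sigma> m b = PS \<mu> uR \<sigma> m a" using PSB[OF bB] .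
  have R': "R_BR \<mu> uR \<sigma>' \<rho>'"
  proof (rule RBR_intro[OF A'])
    fix k x c assume pos: "\<rho>' k x > 0"
    show "PS \<mu> uR \<sigma>' k c \<le> PS \<mu> uR \<sigma>' k x"
    proof (cases "k = m")
      case True
      then have x: "x = a" using pos m' by (simp add: \<rho>'_def dlt_def split: if_splits)
      show ?thesis
      proof (cases "c \<in> B")
        case True
        then show ?thesis using PSB DrB \<open>k = m\<close> x by (simp add: PSm Dr_def[symmetric])
      next
        case False
        then have "\<epsilon> * (Dr c - Dr a) \<le> (PS \<mu> uR \<sigma> m a - PS \<mu> uR \<sigma> m c) / 2"
          using E2 by (meson ComplI abs_ge_self order_trans mult_left_mono epos less_imp_le)
        then show ?thesis using \<open>k = m\<close> x by (simp add: PSm Dr_def[symmetric] algebra_simps)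
      qed
    next
      case km: False
      show ?thesis
      proof (cases "k = m'")
        case True
        then have x: "x = b" using pos m' by (simp add: \<rho>'_def dlt_def split: if_splits)
        show ?thesis
        proof (cases "c \<in> B")
          case True
          then show ?thesis using PSB DrB bB \<open>k = m'\<close> x by (simp add: PSm' Dr_def[symmetric])
        next
          case False
          then have "\<epsilon> * (Dr b - Dr c) \<le> (PS \<mu> uR \<sigma> m a - PS \<mu> uR \<sigma> m c) / 2"
            using E3 by (meson ComplI abs_ge_self order_trans mult_left_mono epos less_imp_le)
          then show ?thesis using \<open>k = m'\<close> x PSb by (simp add: PSm' Dr_def[symmetric] algebra_simps)
        qed
      next
        case False
        then have kx: "\<rho> k x > 0" using pos km by (simp add: \<rho>'_def)
        show ?thesis using RBR_max[OF R A kx, of c] PSk[OF km False, of uR] by simp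
      qed
    qed
  qed
  have G0: "GG \<mu> uS \<sigma> \<rho> m' = 0" by (simp add: GG_def PS_def m')
  have Gm: "GG \<mu> uS \<sigma> \<rho> m = PS \<mu> uS \<sigma> m a" "GG \<mu> uS \<sigma> \<rho> m = PS \<mu> uS \<sigma> m b"
    using tieA(1)[OF P R O ab(2)] tieA(1)[OF P R O ab(3)] by simp_all
  have G'm: "GG \<mu> uS \<sigma>' \<rho>' m = PS \<mu> uS \<sigma> m a / 2 + \<epsilon> * Ds a"
    using m' by (simp add: GG_def \<rho>'_def PSm Ds_def)
  have G'm': "GG \<mu> uS \<sigma>' \<rho>' m' = PS \<mu> uS \<sigma> m b / 2 - \<epsilon> * Ds b"
    using m' by (simp add: GG_def \<rho>'_def PSm' Ds_def)
  have G'k: "GG \<mu> uS \<sigma>' \<rho>' k = GG \<mu> uS \<sigma> \<rho> k" if "k \<noteq> m" "k \<noteq> m'" for k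
    using that by (simp add: GG_def \<rho>'_def PSk)
  have "GG \<mu> uS \<sigma>' \<rho>' = ((GG \<mu> uS \<sigma> \<rho>)(m := GG \<mu> uS \<sigma>' \<rho>' m))(m' := GG \<mu> uS \<sigma>' \<rho>' m')"
    using G'k by (auto simp: fun_eq_iff)
  then have "U \<mu> uS \<sigma>' \<rho>' = U \<mu> uS \<sigma> \<rho> - GG \<mu> uS \<sigma> \<rho> m + GG \<mu> uS \<sigma>' \<rho>' m - GG \<mu> uS \<sigma> \<rho> m' + GG \<mu> uS \<sigma>' \<rho>' m'"
  proof -
    assume eqG: "GG \<mu> uS \<sigma>' \<rho>' = ((GG \<mu> uS \<sigma> \<rho>)(m := GG \<mu> uS \<sigma>' \<rho>' m))(m' := GG \<mu> uS \<sigma>' \<rho>' m')"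
    have "U \<mu> uS \<sigma>' \<rho>' = (\<Sum>k\<in>UNIV. ((GG \<mu> uS \<sigma> \<rho>)(m := GG \<mu> uS \<sigma>' \<rho>' m)) k) - ((GG \<mu> uS \<sigma> \<rho>)(m := GG \<mu> uS \<sigma>' \<rho>' m)) m' + GG \<mu> uS \<sigma>' \<rho>' m'"
      unfolding U_GG by (subst eqG, rule sum_upd)
    also have "\<dots> = U \<mu> uS \<sigma> \<rho> - GG \<mu> uS \<sigma> \<rho> m + GG \<mu> uS \<sigma>' \<rho>' m - GG \<mu> uS \<sigma> \<rho> m' + GG \<mu> uS \<sigma>' \<rho>' m'"
      unfolding sum_upd U_GG using m'(1) by simp
    finally show ?thesis .
  qed
  also have "\<dots> = U \<mu> uS \<sigma> \<rho> + \<epsilon> * (Ds a - Ds b)"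
    using G0 Gm G'm G'm' by (simp add: algebra_simps)
  finally have "U \<mu> uS \<sigma>' \<rho>' > U \<mu> uS \<sigma> \<rho>" using epos Dsab by simp
  moreover have "U \<mu> uS \<sigma>' \<rho>' \<le> U \<mu> uS \<sigma> \<rho>"
    using O M' A' R' unfolding optp_def profile_def by blast
  ultimately show False by simp
qed


definition gen :: "('a::finite \<Rightarrow> 'w::finite \<Rightarrow> real) \<Rightarrow> ('a \<Rightarrow> 'w \<Rightarrow> real) \<Rightarrow> bool" where
  "gen uS uR \<longleftrightarrow>
    (\<forall>T a b C. a \<noteq> b \<longrightarrow> a \<notin> C \<longrightarrow> card C < card T \<longrightarrow> phiv uS T b a \<notin> span (phiv uR T a ` C)) \<and>
    (\<forall>T a c0 C. c0 \<noteq> a \<longrightarrow> a \<notin> C \<longrightarrow> c0 \<notin> C \<longrightarrow> card C < card T \<longrightarrow> phiv uR T a c0 \<notin> span (phiv uR T a ` C))"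

lemma pure_onpath:
  fixes \<sigma> :: "'w::finite \<Rightarrow> 'm::finite \<Rightarrow> real" and \<rho> :: "'m \<Rightarrow> 'a::finite \<Rightarrow> real"
  assumes mu: "\<And>w. \<mu> w > 0" and P: "profile \<sigma> \<rho>" and R: "R_BR \<mu> uR \<sigma> \<rho>"
    and O: "optp \<mu> uS uR \<sigma> \<rho>" and g: "gen uS uR" and card: "CARD('m) > CARD('w)"
    and w0: "\<sigma> w0 m > 0"
  shows "\<exists>a. \<rho> m = dlt a"
proof -
  have A: "act_strat \<rho>" using P unfolding profile_def by simp
  have M: "msg_strat \<sigma>" using P unfolding profile_def by simp
  have gS: "\<And>T a b C. a \<noteq> b \<Longrightarrow> a \<notin> C \<Longrightarrow> card C < card T \<Longrightarrow> phiv uS T b a \<notin> span (phiv uR T a ` C)"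
    and gI: "\<And>T a c0 C. c0 \<noteq> a \<Longrightarrow> a \<notin> C \<Longrightarrow> c0 \<notin> C \<Longrightarrow> card C < card T \<Longrightarrow> phiv uR T a c0 \<notin> span (phiv uR T a ` C)"
    using g unfolding gen_def by blast+
  obtain a where a: "\<rho> m a > 0"
  proof -
    have "\<exists>a. \<rho> m a > 0"
    proof (rule ccontr)
      assume "\<not> ?thesis"
      then have "\<And>a. \<rho> m a \<le> 0" by (simp add: not_less)
      then have "sum (\<rho> m) UNIV \<le> 0" by (simp add: sum_nonpos)
      then show False using A unfolding act_strat_def by simp
    qed
    then show ?thesis using that by blast
  qed
  show ?thesis
  proof (cases "\<forall>b. b \<noteq> a \<longrightarrow> \<rho> m b = 0")
    case True
    have "sum (\<rho> m) UNIV = \<rho> m a + sum (\<rho> m) (UNIV - {a})" by (rule sum.remove) auto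
    also have "sum (\<rho> m) (UNIV - {a}) = 0" using True by (intro sum.neutral) auto
    finally have "\<rho> m a = 1" using A unfolding act_strat_def by simp
    then have "\<rho> m = dlt a" using True by (auto simp: dlt_def fun_eq_iff)
    then show ?thesis by blast
  next
    case False
    then obtain b where b: "b \<noteq> a" "\<rho> m b \<noteq> 0" by blast
    then have bpos: "\<rho> m b > 0" using A unfolding act_strat_def by (metis less_eq_real_def)
    have ba: "a \<noteq> b" using b by simp
    have main: False if P1: "profile \<sigma>1 \<rho>" and R1: "R_BR \<mu> uR \<sigma>1 \<rho>" and O1: "optp \<mu> uS uR \<sigma>1 \<rho>"
      and u1: "\<sigma>1 w1 m > 0" and m1: "m1 \<noteq> m" "\<And>w. \<sigma>1 w m1 = 0" for \<sigma>1 w1 m1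
    proof (rule SPL[OF mu P1 R1 O1 u1 ba a bpos m1 refl])
      fix C assume "a \<notin> C" "card C < card {w. \<sigma>1 w m > 0}"
      then show "phiv uS {w. \<sigma>1 w m > 0} b a \<notin> span (phiv uR {w. \<sigma>1 w m > 0} a ` C)"
        using gS ba by blast
    next
      fix c0 C assume "c0 \<noteq> a" "a \<notin> C" "c0 \<notin> C" "card C < card {w. \<sigma>1 w m > 0}"
      then show "phiv uR {w. \<sigma>1 w m > 0} a c0 \<notin> span (phiv uR {w. \<sigma>1 w m > 0} a ` C)"
        using gI by blast
    qed
    show ?thesis
    proof (cases "\<exists>m1. m1 \<noteq> m \<and> (\<forall>w. \<sigma> w m1 = 0)")
      case True
      then obtain m1 where "m1 \<noteq> m" "\<And>w. \<sigma> w m1 = 0" by blast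
      then show ?thesis using main[OF P R O w0] by blast
    next
      case False
      have used: "\<exists>w. \<sigma> w k > 0" for k
      proof (cases "k = m")
        case True then show ?thesis using w0 by blast
      next
        case km: False
        then obtain w where "\<sigma> w k \<noteq> 0" using False by blast
        then have "\<sigma> w k > 0" using M unfolding msg_strat_def by (metis less_eq_real_def)
        then show ?thesis by blast
      qed
      obtain \<sigma>1 where s1: "profile \<sigma>1 \<rho>" "R_BR \<mu> uR \<sigma>1 \<rho>" "U \<mu> uS \<sigma>1 \<rho> = U \<mu> uS \<sigma> \<rho>"
        "\<exists>k'. k' \<noteq> m \<and> (\<forall>w. \<sigma>1 w k' = 0)" "\<forall>w. \<sigma> w m > 0 \<longrightarrow> \<sigma>1 w m > 0"
        using RSC[OF mu P R O used card, of m] by blast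
      have O1: "optp \<mu> uS uR \<sigma>1 \<rho>" using O s1(3) unfolding optp_def by simp
      obtain k' where "k' \<noteq> m" "\<And>w. \<sigma>1 w k' = 0" using s1(4) by blast
      moreover have "\<sigma>1 w0 m > 0" using s1(5) w0 by blast
      ultimately show ?thesis using main[OF s1(1) s1(2) O1] by blast
    qed
  qed
qed


lemma VV_dlt: "\<rho> m = dlt a \<Longrightarrow> VV u \<rho> m w = u a w"
  by (simp add: VV_def)

lemma partition_eq:
  fixes \<sigma> :: "'w::finite \<Rightarrow> 'm::finite \<Rightarrow> real" and \<rho> :: "'m \<Rightarrow> 'a::finite \<Rightarrow> real"
  assumes mu: "\<And>w. \<mu> w > 0" and P: "profile \<sigma> \<rho>" and S: "S_BR \<mu> uS \<sigma> \<rho>" and R: "R_BR \<mu> uR \<sigma> \<rho>"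
    and pure: "\<And>m w. \<sigma> w m > 0 \<Longrightarrow> \<exists>a. \<rho> m = dlt a"
    and G0: "\<And>w a b. a \<noteq> b \<Longrightarrow> uS a w \<noteq> uS b w"
    and cardA: "CARD('a) \<le> CARD('m)"
  shows "\<exists>(\<sigma>'::'w \<Rightarrow> 'm \<Rightarrow> real) \<rho>'. profile \<sigma>' \<rho>' \<and> S_BR \<mu> uS \<sigma>' \<rho>' \<and> R_BR \<mu> uR \<sigma>' \<rho>' \<and> partitional \<sigma>' \<and> U \<mu> uS \<sigma>' \<rho>' = U \<mu> uS \<sigma> \<rho>"
proof -
  have A: "act_strat \<rho>" using P unfolding profile_def by simp
  have M: "msg_strat \<sigma>" using P unfolding profile_def by simp
  define act where "act m = (SOME a. \<rho> m = dlt a)" for m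
  have act: "\<rho> m = dlt (act m)" if "\<sigma> w m > 0" for m w
    unfolding act_def using pure[OF that] by (rule someI_ex)
  have exm: "\<exists>m. \<sigma> w m > 0" for w
  proof (rule ccontr)
    assume "\<not> ?thesis"
    then have "\<And>m. \<sigma> w m \<le> 0" by (simp add: not_less)
    then have "sum (\<sigma> w) UNIV \<le> 0" by (simp add: sum_nonpos)
    then show False using M unfolding msg_strat_def by simp
  qed
  define mw where "mw w = (SOME m. \<sigma> w m > 0)" for w
  have mw: "\<sigma> w (mw w) > 0" for w unfolding mw_def using exm[of w] by (rule someI_ex)
  define \<alpha> where "\<alpha> w = act (mw w)" for w
  have VVm: "VV uS \<rho> m w = uS (act m) w" if "\<sigma> w' m > 0" for m w w'
    using act[OF that] by (simp add: VV_def)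
  have F1: "act m = \<alpha> w" if pos: "\<sigma> w m > 0" for m w
  proof -
    have "VV uS \<rho> (mw w) w \<le> VV uS \<rho> m w" by (rule SBR_max[OF S M mu pos])
    moreover have "VV uS \<rho> m w \<le> VV uS \<rho> (mw w) w" by (rule SBR_max[OF S M mu mw])
    ultimately have "uS (act m) w = uS (\<alpha> w) w" using VVm[OF pos] VVm[OF mw[of w]] unfolding \<alpha>_def by simp
    then show ?thesis using G0 by blast
  qed
  obtain e :: "'a \<Rightarrow> 'm" where e: "inj e"
    using card_le_inj[of "UNIV::'a set" "UNIV::'m set"] cardA by auto
  define w0 :: 'w where "w0 = undefined"
  define \<beta> where "\<beta> k = (if k \<in> e ` range \<alpha> then inv e k else \<alpha> w0)" for k
  have \<beta>e: "\<beta> (e (\<alpha> w)) = \<alpha> w" for w by (simp add: \<beta>_def e)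
  have \<beta>r: "\<exists>w'. \<beta> k = \<alpha> w'" for k by (cases "k \<in> e ` range \<alpha>") (auto simp: \<beta>_def e)
  define \<sigma>' where "\<sigma>' w = dlt (e (\<alpha> w))" for w
  define \<rho>' where "\<rho>' k = dlt (\<beta> k)" for k
  have P': "profile \<sigma>' \<rho>'"
    unfolding profile_def msg_strat_def act_strat_def \<sigma>'_def \<rho>'_def by (auto simp: dlt_def)
  have part: "partitional \<sigma>'" unfolding partitional_def \<sigma>'_def by (auto simp: dlt_def)
  have VV': "VV uS \<rho>' k w = uS (\<beta> k) w" for k w unfolding \<rho>'_def by (simp add: VV_def)
  have S': "S_BR \<mu> uS \<sigma>' \<rho>'"
  proof (rule SBR_intro)
    show "msg_strat \<sigma>'" using P' unfolding profile_def by simp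
    show "\<And>w. \<mu> w > 0" by (rule mu)
    fix w k k' assume "\<sigma>' w k > 0"
    then have k: "k = e (\<alpha> w)" unfolding \<sigma>'_def by (simp add: dlt_def split: if_splits)
    obtain w' where w': "\<beta> k' = \<alpha> w'" using \<beta>r by blast
    have "VV uS \<rho> (mw w') w \<le> VV uS \<rho> (mw w) w" by (rule SBR_max[OF S M mu mw])
    then have "uS (\<alpha> w') w \<le> uS (\<alpha> w) w"
      using VVm[OF mw[of w']] VVm[OF mw[of w]] unfolding \<alpha>_def by simp
    then show "VV uS \<rho>' k' w \<le> VV uS \<rho>' k w" unfolding VV' k \<beta>e w' .
  qed
  have R': "R_BR \<mu> uR \<sigma>' \<rho>'"
  proof (rule RBR_intro)
    show "act_strat \<rho>'" using P' unfolding profile_def by simp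
    fix k x c assume "\<rho>' k x > 0"
    then have x: "x = \<beta> k" unfolding \<rho>'_def by (simp add: dlt_def split: if_splits)
    show "PS \<mu> uR \<sigma>' k c \<le> PS \<mu> uR \<sigma>' k x"
    proof (cases "k \<in> e ` range \<alpha>")
      case False
      then have "\<And>w. \<sigma>' w k = 0" unfolding \<sigma>'_def dlt_def by auto
      then show ?thesis by (simp add: PS_def)
    next
      case True
      then obtain w1 where k: "k = e (\<alpha> w1)" by blast
      define a where "a = \<alpha> w1"
      have xa: "x = a" using x k \<beta>e unfolding a_def by simp
      define Ma where "Ma = {m. (\<exists>w. \<sigma> w m > 0) \<and> act m = a}"
      have ind: "\<sigma>' w k = (\<Sum>m\<in>Ma. \<sigma> w m)" for w
      proof (cases "\<alpha> w = a")
        case True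
        have "(\<Sum>m\<in>Ma. \<sigma> w m) = (\<Sum>m\<in>UNIV. \<sigma> w m)"
        proof (rule sum.mono_neutral_left)
          show "\<forall>i\<in>UNIV - Ma. \<sigma> w i = 0"
          proof
            fix i assume "i \<in> UNIV - Ma"
            then have "\<not> \<sigma> w i > 0" using F1 True unfolding Ma_def by blast
            then show "\<sigma> w i = 0" using M unfolding msg_strat_def by (metis less_eq_real_def)
          qed
        qed auto
        also have "\<dots> = 1" using M unfolding msg_strat_def by simp
        finally show ?thesis using True k e unfolding \<sigma>'_def a_def by (simp add: dlt_def)
      next
        case False
        have "(\<Sum>m\<in>Ma. \<sigma> w m) = 0"
        proof (rule sum.neutral, rule ballI)
          fix i assume "i \<in> Ma"
          then have ia: "act i = a" unfolding Ma_def by blast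
          have "\<not> \<sigma> w i > 0"
          proof
            assume "\<sigma> w i > 0"
            then have "act i = \<alpha> w" by (rule F1)
            then show False using ia False by simp
          qed
          then show "\<sigma> w i = 0" using M unfolding msg_strat_def by (metis less_eq_real_def)
        qed
        moreover have "e (\<alpha> w) \<noteq> e a" using False e by (simp add: inj_eq)
        ultimately show ?thesis using k unfolding \<sigma>'_def a_def by (simp add: dlt_def)
      qed
      have PSeq: "PS \<mu> uR \<sigma>' k c' = (\<Sum>m\<in>Ma. PS \<mu> uR \<sigma> m c')" for c'
      proof -
        have "PS \<mu> uR \<sigma>' k c' = (\<Sum>w\<in>UNIV. \<Sum>m\<in>Ma. \<mu> w * \<sigma> w m * uR c' w)"
          unfolding PS_def ind by (simp add: sum_distrib_left sum_distrib_right)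
        also have "\<dots> = (\<Sum>m\<in>Ma. PS \<mu> uR \<sigma> m c')" unfolding PS_def by (rule sum.swap)
        finally show ?thesis .
      qed
      have "(\<Sum>m\<in>Ma. PS \<mu> uR \<sigma> m c) \<le> (\<Sum>m\<in>Ma. PS \<mu> uR \<sigma> m a)"
      proof (rule sum_mono)
        fix m assume "m \<in> Ma"
        then obtain w where "\<sigma> w m > 0" "act m = a" unfolding Ma_def by blast
        then have "\<rho> m a > 0" using act by (simp add: dlt_def)
        then show "PS \<mu> uR \<sigma> m c \<le> PS \<mu> uR \<sigma> m a" by (rule RBR_max[OF R A])
      qed
      then show ?thesis unfolding PSeq xa .
    qed
  qed
  have "U \<mu> uS \<sigma>' \<rho>' = (\<Sum>w\<in>UNIV. \<mu> w * uS (\<alpha> w) w)"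
    unfolding U_VV VV' by (simp add: \<sigma>'_def \<beta>e)
  also have "\<dots> = U \<mu> uS \<sigma> \<rho>"
    unfolding U_VV
  proof (intro sum.cong refl arg_cong2[where f=times] conv_eq[symmetric])
    fix w show "sum (\<sigma> w) UNIV = 1" using M unfolding msg_strat_def by simp
    fix m assume "\<sigma> w m \<noteq> 0"
    then have pos: "\<sigma> w m > 0" using M unfolding msg_strat_def by (metis less_eq_real_def)
    show "VV uS \<rho> m w = uS (\<alpha> w) w" using VVm[OF pos] F1[OF pos] by simp
  qed
  finally have "U \<mu> uS \<sigma>' \<rho>' = U \<mu> uS \<sigma> \<rho>" .
  then show ?thesis using P' S' R' part by (intro exI[of _ \<sigma>'] exI[of _ \<rho>']) simp
qed


lemma le1_of_sum:
  fixes p :: "'a::finite \<Rightarrow> real"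
  assumes "\<And>a. p a \<ge> 0" "sum p UNIV = 1"
  shows "p a \<le> 1"
proof -
  have "p a \<le> sum p UNIV" by (rule member_le_sum) (use assms in auto)
  then show ?thesis using assms by simp
qed

lemma U_bound:
  fixes \<sigma> :: "'w::finite \<Rightarrow> 'm::finite \<Rightarrow> real" and \<rho> :: "'m \<Rightarrow> 'a::finite \<Rightarrow> real"
  assumes P: "profile \<sigma> \<rho>" and mu: "\<And>w. \<mu> w \<ge> 0"
  shows "U \<mu> u \<sigma> \<rho> \<le> (\<Sum>w\<in>UNIV. \<Sum>m\<in>(UNIV::'m set). \<Sum>a\<in>(UNIV::'a set). \<mu> w * \<bar>u a w\<bar>)"
  unfolding U_def
proof (intro sum_mono)
  fix w m a
  have s: "0 \<le> \<sigma> w m" "\<sigma> w m \<le> 1" using P le1_of_sum[of "\<sigma> w"] unfolding profile_def msg_strat_def by auto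
  have r: "0 \<le> \<rho> m a" "\<rho> m a \<le> 1" using P le1_of_sum[of "\<rho> m"] unfolding profile_def act_strat_def by auto
  have "\<mu> w * \<sigma> w m * \<rho> m a * u a w \<le> \<bar>\<mu> w * \<sigma> w m * \<rho> m a * u a w\<bar>" by simp
  also have "\<dots> = \<mu> w * (\<sigma> w m * \<rho> m a) * \<bar>u a w\<bar>" using mu[of w] s r by (simp add: abs_mult)
  also have "\<dots> \<le> \<mu> w * 1 * \<bar>u a w\<bar>"
    using s r mu[of w] by (intro mult_right_mono mult_left_mono) (auto intro: mult_le_one)
  finally show "\<mu> w * \<sigma> w m * \<rho> m a * u a w \<le> \<mu> w * \<bar>u a w\<bar>" by simp
qed

lemma babbling:
  fixes \<mu> :: "'w::finite \<Rightarrow> real"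
  assumes mu: "\<And>w. \<mu> w > 0"
  shows "\<exists>(\<sigma>::'w \<Rightarrow> 'm::finite \<Rightarrow> real) (\<rho>::'m \<Rightarrow> 'a::finite \<Rightarrow> real). profile \<sigma> \<rho> \<and> S_BR \<mu> uS \<sigma> \<rho> \<and> R_BR \<mu> uR \<sigma> \<rho>"
proof -
  define m0 :: 'm where "m0 = undefined"
  obtain a0 :: 'a where a0: "\<forall>c. (\<Sum>w\<in>UNIV. \<mu> w * uR c w) \<le> (\<Sum>w\<in>UNIV. \<mu> w * uR a0 w)"
    using ex_max[of "\<lambda>c. \<Sum>w\<in>UNIV. \<mu> w * uR c w"] by blast
  define \<sigma> :: "'w \<Rightarrow> 'm \<Rightarrow> real" where "\<sigma> w = dlt m0" for w
  define \<rho> :: "'m \<Rightarrow> 'a \<Rightarrow> real" where "\<rho> m = dlt a0" for m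
  have P: "profile \<sigma> \<rho>" unfolding profile_def msg_strat_def act_strat_def \<sigma>_def \<rho>_def by (auto simp: dlt_def)
  have S: "S_BR \<mu> uS \<sigma> \<rho>"
  proof (rule SBR_intro)
    show "msg_strat \<sigma>" using P unfolding profile_def by simp
    show "\<And>w. \<mu> w > 0" by (rule mu)
    fix w m k show "VV uS \<rho> k w \<le> VV uS \<rho> m w" by (simp add: VV_def \<rho>_def)
  qed
  have R: "R_BR \<mu> uR \<sigma> \<rho>"
  proof (rule RBR_intro)
    show "act_strat \<rho>" using P unfolding profile_def by simp
    fix m a c assume "\<rho> m a > 0"
    then have a: "a = a0" by (simp add: \<rho>_def dlt_def split: if_splits)
    have PSe: "PS \<mu> uR \<sigma> m c' = dlt m0 m * (\<Sum>w\<in>UNIV. \<mu> w * uR c' w)" for c'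
      unfolding PS_def \<sigma>_def sum_distrib_left by (intro sum.cong refl) (simp add: algebra_simps)
    show "PS \<mu> uR \<sigma> m c \<le> PS \<mu> uR \<sigma> m a"
      unfolding PSe a using a0 by (simp add: dlt_def)
  qed
  show ?thesis using P S R by blast
qed


lemma attain:
  fixes \<mu> :: "'w::finite \<Rightarrow> real" and uS uR :: "'a::finite \<Rightarrow> 'w \<Rightarrow> real"
  assumes mu: "\<And>w. \<mu> w > 0"
  shows "\<exists>(\<sigma>::'w \<Rightarrow> 'm::finite \<Rightarrow> real) \<rho>. profile \<sigma> \<rho> \<and> S_BR \<mu> uS \<sigma> \<rho> \<and> R_BR \<mu> uR \<sigma> \<rho> \<and>
     (\<forall>(\<sigma>'::'w \<Rightarrow> 'm \<Rightarrow> real) \<rho>'. profile \<sigma>' \<rho>' \<and> S_BR \<mu> uS \<sigma>' \<rho>' \<and> R_BR \<mu> uR \<sigma>' \<rho>' \<longrightarrow> U \<mu> uS \<sigma>' \<rho>' \<le> U \<mu> uS \<sigma> \<rho>)"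
proof -
  define sv :: "(real^('w \<times> 'm)) \<times> (real^('m \<times> 'a)) \<Rightarrow> 'w \<Rightarrow> 'm \<Rightarrow> real" where "sv z w m = fst z $ (w, m)" for z w m
  define rv :: "(real^('w \<times> 'm)) \<times> (real^('m \<times> 'a)) \<Rightarrow> 'm \<Rightarrow> 'a \<Rightarrow> real" where "rv z m a = snd z $ (m, a)" for z m a
  define K where "K = {z. profile (sv z) (rv z) \<and> S_BR \<mu> uS (sv z) (rv z) \<and> R_BR \<mu> uR (sv z) (rv z)}"
  define f where "f z = U \<mu> uS (sv z) (rv z)" for z
  have Keq: "K = {z. ((\<forall>w m. 0 \<le> fst z $ (w, m)) \<and> (\<forall>w. (\<Sum>m\<in>UNIV. fst z $ (w, m)) = 1)) \<and>
      ((\<forall>m a. 0 \<le> snd z $ (m, a)) \<and> (\<forall>m. (\<Sum>a\<in>UNIV. snd z $ (m, a)) = 1)) \<and>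
      (\<forall>\<sigma>'. msg_strat \<sigma>' \<longrightarrow> (\<Sum>w\<in>UNIV. \<Sum>m\<in>UNIV. \<Sum>a\<in>UNIV. \<mu> w * \<sigma>' w m * snd z $ (m, a) * uS a w)
            \<le> (\<Sum>w\<in>UNIV. \<Sum>m\<in>UNIV. \<Sum>a\<in>UNIV. \<mu> w * fst z $ (w, m) * snd z $ (m, a) * uS a w)) \<and>
      (\<forall>\<rho>'. act_strat \<rho>' \<longrightarrow> (\<Sum>w\<in>UNIV. \<Sum>m\<in>UNIV. \<Sum>a\<in>UNIV. \<mu> w * fst z $ (w, m) * \<rho>' m a * uR a w)
            \<le> (\<Sum>w\<in>UNIV. \<Sum>m\<in>UNIV. \<Sum>a\<in>UNIV. \<mu> w * fst z $ (w, m) * snd z $ (m, a) * uR a w))}"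
    unfolding K_def profile_def msg_strat_def act_strat_def S_BR_def R_BR_def U_def sv_def rv_def by simp
  have closedK: "closed K"
    unfolding Keq
    by (intro closed_Collect_conj closed_Collect_all closed_Collect_imp closed_Collect_le closed_Collect_eq
        continuous_intros open_Collect_const)
  have bK: "K \<subseteq> cbox 0 1 \<times> cbox 0 1"
  proof
    fix z assume "z \<in> K"
    then have P: "profile (sv z) (rv z)" unfolding K_def by simp
    have "fst z \<in> cbox 0 1" unfolding mem_box_cart
    proof
      fix i :: "'w \<times> 'm"
      obtain w m where i: "i = (w, m)" by fastforce
      show "0 $ i \<le> fst z $ i \<and> fst z $ i \<le> 1 $ i"
        using P le1_of_sum[of "sv z w" m] unfolding profile_def msg_strat_def i by (auto simp: sv_def)
    qed
    moreover have "snd z \<in> cbox 0 1" unfolding mem_box_cart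
    proof
      fix i :: "'m \<times> 'a"
      obtain m a where i: "i = (m, a)" by fastforce
      show "0 $ i \<le> snd z $ i \<and> snd z $ i \<le> 1 $ i"
        using P le1_of_sum[of "rv z m" a] unfolding profile_def act_strat_def i by (auto simp: rv_def)
    qed
    ultimately show "z \<in> cbox 0 1 \<times> cbox 0 1" by (simp add: mem_Times_iff)
  qed
  have compactK: "compact K"
    unfolding compact_eq_bounded_closed
    using closedK bounded_subset[OF bounded_Times[OF bounded_cbox bounded_cbox] bK] by simp
  have lift: "(\<chi> p. \<sigma>' (fst p) (snd p), \<chi> p. \<rho>' (fst p) (snd p)) \<in> K \<and>
      sv (\<chi> p. \<sigma>' (fst p) (snd p), \<chi> p. \<rho>' (fst p) (snd p)) = \<sigma>' \<and>
      rv (\<chi> p. \<sigma>' (fst p) (snd p), \<chi> p. \<rho>' (fst p) (snd p)) = \<rho>'"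
    if "profile \<sigma>' \<rho>' \<and> S_BR \<mu> uS \<sigma>' \<rho>' \<and> R_BR \<mu> uR \<sigma>' \<rho>'" for \<sigma>' :: "'w \<Rightarrow> 'm \<Rightarrow> real" and \<rho>' :: "'m \<Rightarrow> 'a \<Rightarrow> real"
  proof -
    have e1: "sv (\<chi> p. \<sigma>' (fst p) (snd p), \<chi> p. \<rho>' (fst p) (snd p)) = \<sigma>'" by (simp add: sv_def fun_eq_iff)
    have e2: "rv (\<chi> p. \<sigma>' (fst p) (snd p), \<chi> p. \<rho>' (fst p) (snd p)) = \<rho>'" by (simp add: rv_def fun_eq_iff)
    show ?thesis using that e1 e2 unfolding K_def by simp
  qed
  obtain \<sigma>0 :: "'w \<Rightarrow> 'm \<Rightarrow> real" and \<rho>0 :: "'m \<Rightarrow> 'a \<Rightarrow> real" where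
    b0: "profile \<sigma>0 \<rho>0 \<and> S_BR \<mu> uS \<sigma>0 \<rho>0 \<and> R_BR \<mu> uR \<sigma>0 \<rho>0"
    using babbling[of \<mu> uS uR] mu by blast
  have Kne: "K \<noteq> {}" using lift[OF b0] by blast
  have contf: "continuous_on K f"
  proof (rule continuous_on_subset[OF _ subset_UNIV])
    show "continuous_on UNIV f" unfolding f_def U_def sv_def rv_def by (intro continuous_intros)
  qed
  obtain z where z: "z \<in> K" "\<And>y. y \<in> K \<Longrightarrow> f y \<le> f z"
    using continuous_attains_sup[OF compactK Kne contf] by blast
  show ?thesis
  proof (intro exI conjI allI impI)
    show "profile (sv z) (rv z)" "S_BR \<mu> uS (sv z) (rv z)" "R_BR \<mu> uR (sv z) (rv z)" using z(1) unfolding K_def by auto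
    fix \<sigma>' :: "'w \<Rightarrow> 'm \<Rightarrow> real" and \<rho>' assume h: "profile \<sigma>' \<rho>' \<and> S_BR \<mu> uS \<sigma>' \<rho>' \<and> R_BR \<mu> uR \<sigma>' \<rho>'"
    show "U \<mu> uS \<sigma>' \<rho>' \<le> U \<mu> uS (sv z) (rv z)"
      using z(2)[of "(\<chi> p. \<sigma>' (fst p) (snd p), \<chi> p. \<rho>' (fst p) (snd p))"] lift[OF h] unfolding f_def by simp
  qed
qed


lemma gen_G0: "gen uS uR \<Longrightarrow> a \<noteq> b \<Longrightarrow> uS a w \<noteq> uS b w"
proof -
  assume g: "gen uS uR" and ab: "a \<noteq> b"
  have "phiv uS {w} b a \<notin> span (phiv uR {w} a ` {})"
  proof -
    have "\<forall>T a b C. a \<noteq> b \<longrightarrow> a \<notin> C \<longrightarrow> card C < card T \<longrightarrow> phiv uS T b a \<notin> span (phiv uR T a ` C)"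
      using g unfolding gen_def by blast
    from this[rule_format, of a b "{}" "{w}"] ab show ?thesis by simp
  qed
  then have "phiv uS {w} b a \<noteq> 0" by (simp add: span_empty)
  then obtain w' where "phiv uS {w} b a $ w' \<noteq> 0" by (metis vec_eq_iff zero_index)
  then show "uS a w \<noteq> uS b w" by (simp add: phiv_def split: if_splits)
qed

lemma main_env:
  fixes \<mu> :: "'w::finite \<Rightarrow> real" and uS uR :: "'a::finite \<Rightarrow> 'w \<Rightarrow> real"
  assumes pr: "is_prior \<mu>" and card: "CARD('m::finite) > max CARD('w) CARD('a)" and g: "gen uS uR"
  shows "values_randomization TYPE('m) \<mu> uS uR \<longrightarrow> commitment_valuable TYPE('m) \<mu> uS uR"
proof
  assume VR: "values_randomization TYPE('m) \<mu> uS uR"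
  have mu: "\<And>w. \<mu> w > 0" using pr unfolding is_prior_def by blast
  define SP where "SP = {U \<mu> uS \<sigma> \<rho> | (\<sigma>::'w \<Rightarrow> 'm \<Rightarrow> real) \<rho>. profile \<sigma> \<rho> \<and> R_BR \<mu> uR \<sigma> \<rho>}"
  define SC where "SC = {U \<mu> uS \<sigma> \<rho> | (\<sigma>::'w \<Rightarrow> 'm \<Rightarrow> real) \<rho>. profile \<sigma> \<rho> \<and> S_BR \<mu> uS \<sigma> \<rho> \<and> R_BR \<mu> uR \<sigma> \<rho>}"
  define SPa where "SPa = {U \<mu> uS \<sigma> \<rho> | (\<sigma>::'w \<Rightarrow> 'm \<Rightarrow> real) \<rho>.
            profile \<sigma> \<rho> \<and> S_BR \<mu> uS \<sigma> \<rho> \<and> R_BR \<mu> uR \<sigma> \<rho> \<and> partitional \<sigma>}"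
  have Pdef: "persuasion_payoff TYPE('m) \<mu> uS uR = Sup SP" unfolding persuasion_payoff_def SP_def ..
  have Cdef: "cheap_talk_payoff TYPE('m) \<mu> uS uR = Sup SC" unfolding cheap_talk_payoff_def SC_def ..
  have Padef: "partitional_cheap_talk_payoff TYPE('m) \<mu> uS uR = Sup SPa" unfolding partitional_cheap_talk_payoff_def SPa_def ..
  define Kb where "Kb = (\<Sum>w\<in>UNIV. \<Sum>m\<in>(UNIV::'m set). \<Sum>a\<in>(UNIV::'a set). \<mu> w * \<bar>uS a w\<bar>)"
  have bSP: "bdd_above SP"
  proof (rule bdd_aboveI)
    fix x assume "x \<in> SP"
    then obtain \<sigma> :: "'w \<Rightarrow> 'm \<Rightarrow> real" and \<rho> where x: "x = U \<mu> uS \<sigma> \<rho>" "profile \<sigma> \<rho>" unfolding SP_def by blast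
    show "x \<le> Kb" unfolding x(1) Kb_def by (rule U_bound[OF x(2)]) (use mu in \<open>simp add: less_imp_le\<close>)
  qed
  have bSPa: "bdd_above SPa"
  proof (rule bdd_aboveI)
    fix x assume "x \<in> SPa"
    then obtain \<sigma> :: "'w \<Rightarrow> 'm \<Rightarrow> real" and \<rho> where x: "x = U \<mu> uS \<sigma> \<rho>" "profile \<sigma> \<rho>" unfolding SPa_def by blast
    show "x \<le> Kb" unfolding x(1) Kb_def by (rule U_bound[OF x(2)]) (use mu in \<open>simp add: less_imp_le\<close>)
  qed
  have ex: "\<exists>(\<sigma>::'w \<Rightarrow> 'm \<Rightarrow> real) \<rho>. profile \<sigma> \<rho> \<and> S_BR \<mu> uS \<sigma> \<rho> \<and> R_BR \<mu> uR \<sigma> \<rho> \<and>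
     (\<forall>(\<sigma>'::'w \<Rightarrow> 'm \<Rightarrow> real) \<rho>'. profile \<sigma>' \<rho>' \<and> S_BR \<mu> uS \<sigma>' \<rho>' \<and> R_BR \<mu> uR \<sigma>' \<rho>' \<longrightarrow> U \<mu> uS \<sigma>' \<rho>' \<le> U \<mu> uS \<sigma> \<rho>)"
    by (rule attain) (rule mu)
  then obtain \<sigma>s :: "'w \<Rightarrow> 'm \<Rightarrow> real" and \<rho>s :: "'m \<Rightarrow> 'a \<Rightarrow> real" where
    H: "profile \<sigma>s \<rho>s \<and> S_BR \<mu> uS \<sigma>s \<rho>s \<and> R_BR \<mu> uR \<sigma>s \<rho>s \<and>
     (\<forall>(\<sigma>'::'w \<Rightarrow> 'm \<Rightarrow> real) \<rho>'. profile \<sigma>' \<rho>' \<and> S_BR \<mu> uS \<sigma>' \<rho>' \<and> R_BR \<mu> uR \<sigma>' \<rho>' \<longrightarrow> U \<mu> uS \<sigma>' \<rho>' \<le> U \<mu> uS \<sigma>s \<rho>s)"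
    by (elim exE)
  have s: "profile \<sigma>s \<rho>s" "S_BR \<mu> uS \<sigma>s \<rho>s" "R_BR \<mu> uR \<sigma>s \<rho>s" using H by simp_all
  have smax: "\<And>(\<sigma>'::'w \<Rightarrow> 'm \<Rightarrow> real) \<rho>'. profile \<sigma>' \<rho>' \<and> S_BR \<mu> uS \<sigma>' \<rho>' \<and> R_BR \<mu> uR \<sigma>' \<rho>' \<Longrightarrow> U \<mu> uS \<sigma>' \<rho>' \<le> U \<mu> uS \<sigma>s \<rho>s"
    using H by blast
  have inSC: "U \<mu> uS \<sigma>s \<rho>s \<in> SC" unfolding SC_def using s by blast
  have Ceq: "Sup SC = U \<mu> uS \<sigma>s \<rho>s"
  proof (rule cSup_eq_maximum[OF inSC])
    fix x assume "x \<in> SC"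
    then obtain \<sigma> :: "'w \<Rightarrow> 'm \<Rightarrow> real" and \<rho> where x: "x = U \<mu> uS \<sigma> \<rho>" "profile \<sigma> \<rho> \<and> S_BR \<mu> uS \<sigma> \<rho> \<and> R_BR \<mu> uR \<sigma> \<rho>"
      unfolding SC_def by blast
    show "x \<le> U \<mu> uS \<sigma>s \<rho>s" unfolding x(1) by (rule smax[OF x(2)])
  qed
  have SCsub: "SC \<subseteq> SP" unfolding SC_def SP_def by blast
  show "commitment_valuable TYPE('m) \<mu> uS uR"
    unfolding commitment_valuable_def Pdef Cdef
  proof (rule ccontr)
    assume "\<not> Sup SC < Sup SP"
    then have PC: "Sup SP \<le> U \<mu> uS \<sigma>s \<rho>s" using Ceq by simp
    have O: "optp \<mu> uS uR \<sigma>s \<rho>s"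
      unfolding optp_def
    proof (intro allI impI)
      fix \<sigma>' :: "'w \<Rightarrow> 'm \<Rightarrow> real" and \<rho>' assume "profile \<sigma>' \<rho>' \<and> R_BR \<mu> uR \<sigma>' \<rho>'"
      then have "U \<mu> uS \<sigma>' \<rho>' \<in> SP" unfolding SP_def by blast
      then have "U \<mu> uS \<sigma>' \<rho>' \<le> Sup SP" by (rule cSup_upper[OF _ bSP])
      then show "U \<mu> uS \<sigma>' \<rho>' \<le> U \<mu> uS \<sigma>s \<rho>s" using PC by simp
    qed
    have cardw: "CARD('m) > CARD('w)" and carda: "CARD('a) \<le> CARD('m)" using card by auto
    have pure: "\<exists>a. \<rho>s m = dlt a" if "\<sigma>s w m > 0" for m w
      by (rule pure_onpath[OF mu s(1) s(3) O g cardw that])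
    obtain \<sigma>' :: "'w \<Rightarrow> 'm \<Rightarrow> real" and \<rho>' where
      p: "profile \<sigma>' \<rho>'" "S_BR \<mu> uS \<sigma>' \<rho>'" "R_BR \<mu> uR \<sigma>' \<rho>'" "partitional \<sigma>'" "U \<mu> uS \<sigma>' \<rho>' = U \<mu> uS \<sigma>s \<rho>s"
    proof -
      have "\<exists>(\<sigma>'::'w \<Rightarrow> 'm \<Rightarrow> real) \<rho>'. profile \<sigma>' \<rho>' \<and> S_BR \<mu> uS \<sigma>' \<rho>' \<and> R_BR \<mu> uR \<sigma>' \<rho>' \<and> partitional \<sigma>' \<and> U \<mu> uS \<sigma>' \<rho>' = U \<mu> uS \<sigma>s \<rho>s"
      proof (rule partition_eq[OF _ s(1) s(2) s(3) _ _ carda])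
        show "\<And>w. \<mu> w > 0" by (rule mu)
        show "\<And>m w. \<sigma>s w m > 0 \<Longrightarrow> \<exists>a. \<rho>s m = dlt a" by (rule pure)
        show "\<And>w a b. a \<noteq> b \<Longrightarrow> uS a w \<noteq> uS b w" by (rule gen_G0[OF g])
      qed
      then show ?thesis using that by blast
    qed
    have "U \<mu> uS \<sigma>s \<rho>s \<in> SPa" unfolding SPa_def mem_Collect_eq
      by (rule exI[of _ \<sigma>'], rule exI[of _ \<rho>']) (use p in simp)
    then have "U \<mu> uS \<sigma>s \<rho>s \<le> Sup SPa" by (rule cSup_upper[OF _ bSPa])
    moreover have "Sup SPa < Sup SC" using VR unfolding values_randomization_def Cdef Padef .
    ultimately show False using Ceq by simp
  qed
qed



lemma span_image_explicit:
  fixes f :: "'c \<Rightarrow> 'v::real_vector"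
  assumes fin: "finite C" and v: "v \<in> span (f ` C)"
  shows "\<exists>l. v = (\<Sum>c\<in>C. l c *\<^sub>R f c)"
  using v
proof (induction rule: real_vector.span_induct_alt)
  case base
  show ?case by (rule exI[of _ "\<lambda>_. 0"]) simp
next
  case (step r x y)
  then obtain c0 where c0: "c0 \<in> C" "x = f c0" by blast
  obtain l where l: "y = (\<Sum>c\<in>C. l c *\<^sub>R f c)" using step by blast
  have "r *\<^sub>R x + y = (\<Sum>c\<in>C. (l c + (if c = c0 then r else 0)) *\<^sub>R f c)"
    unfolding l c0(2) scaleR_add_left sum.distrib using c0(1) fin
    by (simp add: if_distrib[of "\<lambda>t. t *\<^sub>R f _"] sum.delta' add.commute cong: if_cong)
  then show ?case by (rule exI[of _ "\<lambda>c. l c + (if c = c0 then r else 0)"])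
qed

type_synonym ('a, 'w) envt = "real ^ (('a \<times> 'w) + ('a \<times> 'w))"

definition badS :: "'w set \<Rightarrow> 'a \<Rightarrow> 'a \<Rightarrow> 'a set \<Rightarrow> ('a::finite, 'w::finite) envt set" where
  "badS T a b C = {x. \<exists>l. \<forall>w\<in>T. x $ Inl (a, w) = x $ Inl (b, w) + (\<Sum>c\<in>C. l c * (x $ Inr (c, w) - x $ Inr (a, w)))}"

definition badI :: "'w set \<Rightarrow> 'a \<Rightarrow> 'a \<Rightarrow> 'a set \<Rightarrow> ('a::finite, 'w::finite) envt set" where
  "badI T a c0 C = {x. \<exists>l. \<forall>w\<in>T. x $ Inr (c0, w) = x $ Inr (a, w) + (\<Sum>c\<in>C. l c * (x $ Inr (c, w) - x $ Inr (a, w)))}"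

lemma negl_badS:
  assumes "a \<noteq> b" "card C < card T"
  shows "negligible (badS T a b C :: ('a::finite, 'w::finite) envt set)"
  unfolding badS_def
proof (rule negl_span[where g="\<lambda>w. Inl (a, w)" and h="\<lambda>w x. x $ Inl (b, w)"
      and wv="\<lambda>c w x. x $ Inr (c, w) - x $ Inr (a, w)"])
  show "finite T" "finite C" by simp_all
  show "inj_on (\<lambda>w. Inl (a, w)) T" by (auto simp: inj_on_def)
  show "card C < card T" by (rule assms(2))
  show "\<And>w. bounded_linear (\<lambda>x::('a, 'w) envt. x $ Inl (b, w))" by (rule bounded_linear_vec_nth)
  show "\<And>c w. bounded_linear (\<lambda>x::('a, 'w) envt. x $ Inr (c, w) - x $ Inr (a, w))"
    by (intro bounded_linear_sub bounded_linear_vec_nth)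
  fix x y :: "('a, 'w) envt" and w c
  assume h: "\<And>i. i \<notin> (\<lambda>w. Inl (a, w)) ` T \<Longrightarrow> x $ i = y $ i"
  have "Inl (b, w) \<notin> (\<lambda>w. Inl (a, w)) ` T" using assms(1) by auto
  moreover have "\<And>c. Inr (c, w) \<notin> (\<lambda>w. Inl (a, w)) ` T" by auto
  ultimately show "x $ Inl (b, w) = y $ Inl (b, w) \<and> x $ Inr (c, w) - x $ Inr (a, w) = y $ Inr (c, w) - y $ Inr (a, w)"
    using h by metis
qed

lemma negl_badI:
  assumes "c0 \<noteq> a" "c0 \<notin> C" "card C < card T"
  shows "negligible (badI T a c0 C :: ('a::finite, 'w::finite) envt set)"
proof -
  define wv :: "'a \<Rightarrow> 'w \<Rightarrow> ('a, 'w) envt \<Rightarrow> real" where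
    "wv c w x = (if c = c0 then 0 else x $ Inr (c, w) - x $ Inr (a, w))" for c w x
  have eq: "badI T a c0 C = {x. \<exists>l. \<forall>w\<in>T. x $ Inr (c0, w) = x $ Inr (a, w) + (\<Sum>c\<in>C. l c * wv c w x)}"
  proof -
    have "(\<Sum>c\<in>C. l c * wv c w x) = (\<Sum>c\<in>C. l c * (x $ Inr (c, w) - x $ Inr (a, w)))" for l w x
      by (rule sum.cong) (use assms(2) in \<open>auto simp: wv_def\<close>)
    then show ?thesis unfolding badI_def by simp
  qed
  show ?thesis unfolding eq
  proof (rule negl_span[where g="\<lambda>w. Inr (c0, w)" and h="\<lambda>w x. x $ Inr (a, w)"])
    show "finite T" "finite C" by simp_all
    show "inj_on (\<lambda>w. Inr (c0, w)) T" by (auto simp: inj_on_def)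
    show "card C < card T" by (rule assms(3))
    show "\<And>w. bounded_linear (\<lambda>x::('a, 'w) envt. x $ Inr (a, w))" by (rule bounded_linear_vec_nth)
    fix c w
    show "bounded_linear (wv c w)"
    proof (cases "c = c0")
      case True
      then have "wv c w = (\<lambda>x. 0)" by (simp add: wv_def fun_eq_iff)
      then show ?thesis by (simp add: bounded_linear_zero)
    next
      case False
      then have "wv c w = (\<lambda>x. x $ Inr (c, w) - x $ Inr (a, w))" by (simp add: wv_def fun_eq_iff)
      then show ?thesis by (simp add: bounded_linear_sub bounded_linear_vec_nth)
    qed
  next
    fix x y :: "('a, 'w) envt" and w c
    assume h: "\<And>i. i \<notin> (\<lambda>w. Inr (c0, w)) ` T \<Longrightarrow> x $ i = y $ i"
    have "Inr (a, w) \<notin> (\<lambda>w. Inr (c0, w)) ` T" using assms(1) by auto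
    then have ha: "x $ Inr (a, w) = y $ Inr (a, w)" by (rule h)
    show "x $ Inr (a, w) = y $ Inr (a, w) \<and> wv c w x = wv c w y"
    proof (cases "c = c0")
      case True
      then show ?thesis using ha by (simp add: wv_def)
    next
      case False
      have "Inr (c, w) \<notin> (\<lambda>w. Inr (c0, w)) ` T" using False by auto
      then have "x $ Inr (c, w) = y $ Inr (c, w)" by (rule h)
      then show ?thesis using ha False by (simp add: wv_def)
    qed
  qed
qed


definition FS :: "'w set \<times> 'a \<times> 'a \<times> 'a set \<Rightarrow> ('a::finite, 'w::finite) envt set" where
  "FS p = (case p of (T, a, b, C) \<Rightarrow> if a \<noteq> b \<and> card C < card T then badS T a b C else {})"

definition FI :: "'w set \<times> 'a \<times> 'a \<times> 'a set \<Rightarrow> ('a::finite, 'w::finite) envt set" where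
  "FI p = (case p of (T, a, c0, C) \<Rightarrow> if c0 \<noteq> a \<and> c0 \<notin> C \<and> card C < card T then badI T a c0 C else {})"

lemma negl_FS: "negligible (FS p)"
  by (cases p) (auto simp: FS_def intro: negl_badS)

lemma negl_FI: "negligible (FI p)"
  by (cases p) (auto simp: FI_def intro: negl_badI)

lemma phiv_comp: "w \<in> T \<Longrightarrow> phiv u T a c $ w = u c w - u a w"
  by (simp add: phiv_def)

lemma nongen_bad:
  fixes x :: "('a::finite, 'w::finite) envt"
  assumes "\<not> gen (env_uS x) (env_uR x)"
  shows "x \<in> (\<Union>p\<in>UNIV. FS p) \<union> (\<Union>p\<in>UNIV. FI p)"
proof -
  have "\<not> (\<forall>T a b C. a \<noteq> b \<longrightarrow> a \<notin> C \<longrightarrow> card C < card T \<longrightarrow> phiv (env_uS x) T b a \<notin> span (phiv (env_uR x) T a ` C))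
     \<or> \<not> (\<forall>T a c0 C. c0 \<noteq> a \<longrightarrow> a \<notin> C \<longrightarrow> c0 \<notin> C \<longrightarrow> card C < card T \<longrightarrow> phiv (env_uR x) T a c0 \<notin> span (phiv (env_uR x) T a ` C))"
    using assms unfolding gen_def by (simp only: de_Morgan_conj)
  then consider (S) T a b C where "a \<noteq> b" "a \<notin> C" "card C < card T"
      "phiv (env_uS x) T b a \<in> span (phiv (env_uR x) T a ` C)"
    | (I) T a c0 C where "c0 \<noteq> a" "a \<notin> C" "c0 \<notin> C" "card C < card T"
      "phiv (env_uR x) T a c0 \<in> span (phiv (env_uR x) T a ` C)"
  proof (elim disjE)
    assume "\<not> (\<forall>T a b C. a \<noteq> b \<longrightarrow> a \<notin> C \<longrightarrow> card C < card T \<longrightarrow> phiv (env_uS x) T b a \<notin> span (phiv (env_uR x) T a ` C))"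
    then obtain T a b C where "a \<noteq> b" "a \<notin> C" "card C < card T" "phiv (env_uS x) T b a \<in> span (phiv (env_uR x) T a ` C)"
      unfolding not_all not_imp not_not by (elim exE conjE)
    then show thesis by (rule that(1))
  next
    assume "\<not> (\<forall>T a c0 C. c0 \<noteq> a \<longrightarrow> a \<notin> C \<longrightarrow> c0 \<notin> C \<longrightarrow> card C < card T \<longrightarrow> phiv (env_uR x) T a c0 \<notin> span (phiv (env_uR x) T a ` C))"
    then obtain T a c0 C where "c0 \<noteq> a" "a \<notin> C" "c0 \<notin> C" "card C < card T" "phiv (env_uR x) T a c0 \<in> span (phiv (env_uR x) T a ` C)"
      unfolding not_all not_imp not_not by (elim exE conjE)
    then show thesis by (rule that(2))
  qed
  then show ?thesis
  proof cases
    case S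
    obtain l where l: "phiv (env_uS x) T b a = (\<Sum>c\<in>C. l c *\<^sub>R phiv (env_uR x) T a c)"
      using span_image_explicit[OF _ S(4)] by auto
    have "x \<in> badS T a b C"
      unfolding badS_def
    proof (intro CollectI exI[of _ l] ballI)
      fix w assume w: "w \<in> T"
      have "phiv (env_uS x) T b a $ w = (\<Sum>c\<in>C. l c *\<^sub>R phiv (env_uR x) T a c) $ w" using l by simp
      then have "x $ Inl (a, w) - x $ Inl (b, w) = (\<Sum>c\<in>C. l c * (x $ Inr (c, w) - x $ Inr (a, w)))"
        unfolding sum_component using w by (simp add: phiv_comp env_uS_def env_uR_def)
      then show "x $ Inl (a, w) = x $ Inl (b, w) + (\<Sum>c\<in>C. l c * (x $ Inr (c, w) - x $ Inr (a, w)))"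
        by simp
    qed
    then have "x \<in> FS (T, a, b, C)" using S by (simp add: FS_def)
    then show ?thesis by blast
  next
    case I
    obtain l where l: "phiv (env_uR x) T a c0 = (\<Sum>c\<in>C. l c *\<^sub>R phiv (env_uR x) T a c)"
      using span_image_explicit[OF _ I(5)] by auto
    have "x \<in> badI T a c0 C"
      unfolding badI_def
    proof (intro CollectI exI[of _ l] ballI)
      fix w assume w: "w \<in> T"
      have "phiv (env_uR x) T a c0 $ w = (\<Sum>c\<in>C. l c *\<^sub>R phiv (env_uR x) T a c) $ w" using l by simp
      then have "x $ Inr (c0, w) - x $ Inr (a, w) = (\<Sum>c\<in>C. l c * (x $ Inr (c, w) - x $ Inr (a, w)))"
        unfolding sum_component using w by (simp add: phiv_comp env_uR_def)
      then show "x $ Inr (c0, w) = x $ Inr (a, w) + (\<Sum>c\<in>C. l c * (x $ Inr (c, w) - x $ Inr (a, w)))"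
        by simp
    qed
    then have "x \<in> FI (T, a, c0, C)" using I by (simp add: FI_def)
    then show ?thesis by blast
  qed
qed

lemma negl_nongen: "negligible {x :: ('a::finite, 'w::finite) envt. \<not> gen (env_uS x) (env_uR x)}"
proof (rule negligible_subset)
  show "{x :: ('a, 'w) envt. \<not> gen (env_uS x) (env_uR x)} \<subseteq> (\<Union>p\<in>UNIV. FS p) \<union> (\<Union>p\<in>UNIV. FI p)"
    using nongen_bad by blast
  show "negligible ((\<Union>p\<in>UNIV. FS p) \<union> (\<Union>p\<in>UNIV. FI p) :: ('a, 'w) envt set)"
    by (intro negligible_Un negligible_Union) (auto intro: negl_FS negl_FI)
qed

lemma one_inner_basis_vec: "b \<in> (Basis::(real^'i::finite) set) \<Longrightarrow> (1::real^'i) \<bullet> b = 1"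
  by (auto simp: Basis_vec_def inner_axis)

lemma measure_cbox01: "emeasure lebesgue (cbox (0::real^'i::finite) 1) = 1"
proof -
  have "cbox (0::real^'i) 1 \<in> sets lborel" by simp
  then have "emeasure lebesgue (cbox (0::real^'i) 1) = emeasure lborel (cbox (0::real^'i) 1)"
    by (simp add: emeasure_completion main_part_sets)
  also have "\<dots> = ennreal (prod ((\<bullet>) (1 - 0)) (Basis::(real^'i) set))"
    by (rule emeasure_lborel_cbox) (simp add: one_inner_basis_vec)
  also have "prod ((\<bullet>) (1 - 0)) (Basis::(real^'i) set) = 1"
    by (rule prod.neutral) (simp add: one_inner_basis_vec)
  finally show ?thesis by simp
qed


theorem theorem2:
  fixes \<mu>0 :: "'w::finite \<Rightarrow> real"
  assumes "is_prior \<mu>0"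
    and "CARD('m::finite) > max CARD('w) CARD('a::finite)"
  shows "\<exists>E :: (real ^ (('a \<times> 'w) + ('a \<times> 'w))) set.
           E \<subseteq> cbox 0 1 \<and> E \<in> sets lebesgue \<and> emeasure lebesgue E = 1 \<and>
           (\<forall>x\<in>E. values_randomization TYPE('m) \<mu>0 (env_uS x) (env_uR x) \<longrightarrow>
                   commitment_valuable TYPE('m) \<mu>0 (env_uS x) (env_uR x))"
proof -
  define N where "N = {x :: real ^ (('a \<times> 'w) + ('a \<times> 'w)). \<not> gen (env_uS x) (env_uR x)}"
  define E where "E = cbox (0 :: real ^ (('a \<times> 'w) + ('a \<times> 'w))) 1 - N"
  have negN: "negligible N" unfolding N_def by (rule negl_nongen)
  have cb: "cbox (0 :: real ^ (('a \<times> 'w) + ('a \<times> 'w))) 1 \<in> sets lebesgue"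
    using lmeasurable_cbox by (rule fmeasurableD)
  have Nnull: "N \<in> null_sets lebesgue" using negN by (simp add: negligible_iff_null_sets)
  have "E \<subseteq> cbox 0 1" unfolding E_def by blast
  moreover have "E \<in> sets lebesgue" unfolding E_def using cb negligible_imp_sets[OF negN] by (rule sets.Diff)
  moreover have "emeasure lebesgue E = 1"
    unfolding E_def using emeasure_Diff_null_set[OF Nnull cb] measure_cbox01 by simp
  moreover have "\<forall>x\<in>E. values_randomization TYPE('m) \<mu>0 (env_uS x) (env_uR x) \<longrightarrow>
                   commitment_valuable TYPE('m) \<mu>0 (env_uS x) (env_uR x)"
  proof
    fix x assume "x \<in> E"
    then have "gen (env_uS x) (env_uR x)" unfolding E_def N_def by blast
    then show "values_randomization TYPE('m) \<mu>0 (env_uS x) (env_uR x) \<longrightarrow>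
                   commitment_valuable TYPE('m) \<mu>0 (env_uS x) (env_uR x)"
      by (rule main_env[OF assms(1) assms(2)])
  qed
  ultimately show ?thesis by blast
qed

end
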